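(* Let $f \in L^1([-\pi,\pi])$ have real Fourier coefficients. Write $f = f_R + \mathrm{i} f_I$ with $f_R, f_I$ real-valued, and assume $f_R$ is essentially positive. Let $A_n := A_n(f)\in\mathbb{R}^{n\times n}$ be the Toeplitz matrix generated by $f$, let $A_R := A_n(f_R) = (A_n + A_n^T)/2$, and let $Y_n$ be the $n\times n$ exchange matrix. Let \[S := \operatorname*{ess\,sup}_{\theta\in[-\pi,\pi]} \left|\frac{f_I(\theta)}{f_R(\theta)}\right|.\] Then there is $\epsilon$ with $0\le \epsilon\le S$, and $\epsilon<S$ whenever $f_I$ is not zero almost everywhere, such that all eigenvalues of the symmetric matrix $A_R^{-1/2}(Y_n A_n)A_R^{-1/2}$ lie in $[-1-\epsilon,-1]\cup[1,1+\epsilon]$.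
   Context: For $g\in L^1([-\pi,\pi])$, $A_n(g)$ denotes the $n\times n$ Toeplitz matrix whose $(i,j)$ entry is $\frac{1}{2\pi}\int_{-\pi}^{\pi} g(\theta)e^{-\mathrm{i}(i-j)\theta}\,d\theta$. The exchange matrix $Y_n$ has $(Y_n)_{ij}=1$ if $i+j=n+1$ and $0$ otherwise. "Essentially positive" means positive almost everywhere. $A_R$ is symmetric positive definite, and $A_R^{-1/2}$ is the inverse of its symmetric positive definite square root. *)

theory Defs
  imports "HOL-Probability.Probability" "Jordan_Normal_Form.Matrix" "Jordan_Normal_Form.Char_Poly"
begin

definition fourier_coeff :: "(real \<Rightarrow> complex) \<Rightarrow> int \<Rightarrow> complex" where
  "fourier_coeff g k = complex_of_real (1 / (2 * pi)) *
     (LINT t:{-pi..pi}|lborel. g t * exp (- (\<i> * of_int k * complex_of_real t)))"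

definition toeplitz :: "nat \<Rightarrow> (real \<Rightarrow> complex) \<Rightarrow> complex mat" where
  "toeplitz n g = mat n n (\<lambda>(i, j). fourier_coeff g (int i - int j))"

definition exchange_mat :: "nat \<Rightarrow> real mat" where
  "exchange_mat n = mat n n (\<lambda>(i, j). if i + j + 1 = n then 1 else 0)"

definition sym_pos_def :: "nat \<Rightarrow> real mat \<Rightarrow> bool" where
  "sym_pos_def n A \<longleftrightarrow> A \<in> carrier_mat n n \<and> transpose_mat A = A \<and>
     (\<forall>v \<in> carrier_vec n. v \<noteq> 0\<^sub>v n \<longrightarrow> v \<bullet> (A *\<^sub>v v) > 0)"

definition spd_sqrt :: "nat \<Rightarrow> real mat \<Rightarrow> real mat" where
  "spd_sqrt n A = (THE S. sym_pos_def n S \<and> S * S = A)"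

definition mat_inv :: "nat \<Rightarrow> real mat \<Rightarrow> real mat" where
  "mat_inv n A = (THE B. B \<in> carrier_mat n n \<and> A * B = 1\<^sub>m n \<and> B * A = 1\<^sub>m n)"

definition spd_inv_sqrt :: "nat \<Rightarrow> real mat \<Rightarrow> real mat" where
  "spd_inv_sqrt n A = mat_inv n (spd_sqrt n A)"

end

theory Submission
  imports Defs
begin

no_notation vec_nth (infixl "$" 90)
no_notation inner (infix "\<bullet>" 70)

lemma mv_index: assumes "A \<in> carrier_mat n m" "v \<in> carrier_vec m" "i < n"
  shows "(A *\<^sub>v v) $ i = (\<Sum>j<m. A $$ (i,j) * v $ j)"
  using assms by (auto simp: scalar_prod_def row_def intro!: sum.cong)

lemma sp_index: assumes "v \<in> carrier_vec n"
  shows "w \<bullet> v = (\<Sum>j<n. w $ j * v $ j)"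
  using assms by (auto simp: scalar_prod_def intro!: sum.cong)

lemma real_sym_has_eigenvalue:
  fixes A :: "real mat"
  assumes A: "A \<in> carrier_mat n n" and sym: "A\<^sup>T = A" and n: "n > 0"
  shows "\<exists>e v. v \<in> carrier_vec n \<and> v \<noteq> 0\<^sub>v n \<and> A *\<^sub>v v = e \<cdot>\<^sub>v v"
proof -
  define Ac where "Ac = map_mat complex_of_real A"
  have Ac: "Ac \<in> carrier_mat n n" using A by (simp add: Ac_def)
  have cp: "char_poly Ac = map_poly of_real (char_poly A)"
    using of_real_hom.char_poly_hom[OF A] by (simp add: Ac_def)
  have deg: "degree (char_poly Ac) = n" using degree_monic_char_poly[OF Ac] by simp
  have "\<not> constant (poly (char_poly Ac))"
    using deg n constant_degree[of "char_poly Ac"] by simp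
  then obtain z where z: "poly (char_poly Ac) z = 0"
    using fundamental_theorem_of_algebra by blast
  then have "eigenvalue Ac z" using eigenvalue_root_char_poly[OF Ac] by simp
  then obtain v where v: "v \<in> carrier_vec n" "v \<noteq> 0\<^sub>v n" "Ac *\<^sub>v v = z \<cdot>\<^sub>v v"
    unfolding eigenvalue_def eigenvector_def using Ac by auto
  define s where "s = (\<Sum>i<n. cnj (v$i) * (Ac *\<^sub>v v)$i)"
  have s1: "s = (\<Sum>i<n. \<Sum>j<n. cnj (v$i) * of_real (A$$(i,j)) * v$j)"
    unfolding s_def
    by (intro sum.cong refl, subst mv_index[OF Ac v(1)], auto simp: Ac_def sum_distrib_left mult.assoc intro!: sum.cong)
       (use A in auto)
  have "cnj s = (\<Sum>i<n. \<Sum>j<n. v$i * of_real (A$$(i,j)) * cnj (v$j))"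
    unfolding s1 by (simp add: mult.commute)
  also have "\<dots> = (\<Sum>j<n. \<Sum>i<n. v$i * of_real (A$$(i,j)) * cnj (v$j))"
    by (rule sum.swap)
  also have "\<dots> = s"
  proof -
    have "\<And>i j. i < n \<Longrightarrow> j < n \<Longrightarrow> A$$(i,j) = A$$(j,i)"
      using sym A by (metis carrier_matD index_transpose_mat(1))
    then show ?thesis unfolding s1
      by (intro sum.cong refl) (auto simp: mult.commute mult.left_commute)
  qed
  finally have cs: "cnj s = s" .
  define N where "N = (\<Sum>i<n. (cmod (v$i))^2)"
  have s2: "s = z * of_real N"
  proof -
    have "s = (\<Sum>i<n. cnj (v$i) * (z * v$i))"
      unfolding s_def v(3) using v(1) by (intro sum.cong refl) auto
    also have "\<dots> = z * (\<Sum>i<n. cnj (v$i) * v$i)" by (simp add: sum_distrib_left mult.commute mult.left_commute)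
    also have "(\<Sum>i<n. cnj (v$i) * v$i) = of_real N" unfolding N_def of_real_sum
      by (intro sum.cong refl) (simp add: complex_norm_square[symmetric] mult.commute)
    finally show ?thesis .
  qed
  have "N > 0"
  proof -
    obtain i where i: "i < n" "v$i \<noteq> 0" using v(1,2) by (metis eq_vecI carrier_vecD index_zero_vec)
    have "(cmod (v$i))^2 \<le> N" unfolding N_def
      by (rule member_le_sum) (use i in auto)
    moreover have "(cmod (v$i))^2 > 0" using i by simp
    ultimately show ?thesis by linarith
  qed
  have "Im z = 0"
  proof -
    have "Im s = 0" using arg_cong[OF cs, of Im] by simp
    then have "Im z * N = 0" using s2 by simp
    then show ?thesis using \<open>N > 0\<close> by simp
  qed
  then have zr: "z = of_real (Re z)" by (simp add: complex_eq_iff)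
  have "poly (char_poly A) (Re z) = 0"
    using z cp zr of_real_hom.poly_map_poly[of "char_poly A" "Re z"] by (metis of_real_eq_0_iff)
  then have "eigenvalue A (Re z)" using eigenvalue_root_char_poly[OF A] by simp
  then show ?thesis unfolding eigenvalue_def eigenvector_def using A by auto
qed

lemma sum_sq_zero_iff_vec:
  fixes w :: "real vec"
  assumes "w \<in> carrier_vec n" "w \<bullet> w = 0"
  shows "w = 0\<^sub>v n"
proof -
  have "(\<Sum>k<n. w$k * w$k) = 0" using assms by (simp add: scalar_prod_def lessThan_atLeast0)
  then have "\<forall>k\<in>{..<n}. w$k * w$k = 0"
    by (subst sum_nonneg_eq_0_iff[symmetric]) auto
  then show ?thesis using assms by (intro eq_vecI) auto
qed

lemma householder:
  fixes u :: "real vec"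
  assumes u: "u \<in> carrier_vec n" "u \<bullet> u = 1" and n: "n > 0"
  shows "\<exists>H. H \<in> carrier_mat n n \<and> H\<^sup>T = H \<and> H * H = 1\<^sub>m n \<and> H *\<^sub>v unit_vec n 0 = u"
proof -
  define w where "w = unit_vec n 0 - u"
  have w: "w \<in> carrier_vec n" using u by (simp add: w_def)
  define c where "c = 2 / (w \<bullet> w)"
  define H where "H = mat n n (\<lambda>(i,j). (if i = j then 1 else 0) - c * w$i * w$j)"
  have H: "H \<in> carrier_mat n n" by (simp add: H_def)
  have HT: "H\<^sup>T = H" by (rule eq_matI) (auto simp: H_def)
  have ww: "w \<bullet> w = (\<Sum>k<n. w$k * w$k)" using w by (simp add: scalar_prod_def lessThan_atLeast0)
  have key: "- 2 * c + c * c * (w \<bullet> w) = 0"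
  proof (cases "w \<bullet> w = 0")
    case True then show ?thesis by (simp add: c_def)
  next
    case False then show ?thesis by (simp add: c_def field_simps)
  qed
  have HH: "H * H = 1\<^sub>m n"
  proof (rule eq_matI)
    fix i j assume ij: "i < dim_row (1\<^sub>m n)" "j < dim_col (1\<^sub>m n)"
    then have i: "i < n" and j: "j < n" by auto
    have "(H * H) $$ (i, j) = (\<Sum>k<n. H $$ (i,k) * H $$ (k,j))"
      using i j H by (simp add: scalar_prod_def lessThan_atLeast0 row_def col_def)
    also have "\<dots> = (\<Sum>k<n. (if i = k then 1 else 0) * (if k = j then 1 else 0)
        - (if i = k then 1 else 0) * (c * w$k * w$j) - (if k = j then 1 else 0) * (c * w$i * w$k)
        + c * c * w$i * w$j * (w$k * w$k))"
      using i j by (intro sum.cong refl) (auto simp: H_def algebra_simps)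
    also have "\<dots> = (if i = j then 1 else 0) - c * w$i * w$j - c * w$i * w$j + c * c * w$i * w$j * (w \<bullet> w)"
      using i j unfolding ww by (simp add: sum.distrib sum_subtractf sum_distrib_left[symmetric] if_distrib[of "\<lambda>x. x * _"] cong: if_cong)
    also have "\<dots> = (if i = j then 1 else 0) + w$i * w$j * (- 2 * c + c * c * (w \<bullet> w))"
      by (simp add: algebra_simps)
    also have "\<dots> = 1\<^sub>m n $$ (i,j)" using key i j by simp
    finally show "(H * H) $$ (i, j) = 1\<^sub>m n $$ (i, j)" .
  qed (use H in auto)
  have He: "H *\<^sub>v unit_vec n 0 = u"
  proof (cases "w \<bullet> w = 0")
    case True
    then have "w = 0\<^sub>v n" using sum_sq_zero_iff_vec[OF w] by simp
    then have "u = unit_vec n 0"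
    proof (intro eq_vecI)
      fix i assume "w = 0\<^sub>v n" "i < dim_vec (unit_vec n 0)"
      then have "w $ i = 0" "i < n" by auto
      then show "u $ i = unit_vec n 0 $ i" using u by (simp add: w_def)
    qed (use u in auto)
    moreover have "H = 1\<^sub>m n" using True by (intro eq_matI) (auto simp: H_def c_def)
    ultimately show ?thesis using u by simp
  next
    case False
    have w0: "w$0 = 1 - u$0" using u n by (simp add: w_def)
    have "w \<bullet> w = 2 - 2 * u$0"
    proof -
      have "w \<bullet> w = unit_vec n 0 \<bullet> unit_vec n 0 - 2 * (unit_vec n 0 \<bullet> u) + u \<bullet> u"
      proof -
        have e: "unit_vec n 0 \<in> carrier_vec n" by simp
        have "w \<bullet> w = unit_vec n 0 \<bullet> w - u \<bullet> w"
          unfolding w_def by (rule minus_scalar_prod_distrib[OF e u(1)]) (use w w_def in auto)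
        also have "unit_vec n 0 \<bullet> w = unit_vec n 0 \<bullet> unit_vec n 0 - unit_vec n 0 \<bullet> u"
          unfolding w_def by (rule scalar_prod_minus_distrib[OF e e u(1)])
        also have "u \<bullet> w = u \<bullet> unit_vec n 0 - u \<bullet> u"
          unfolding w_def by (rule scalar_prod_minus_distrib[OF u(1) e u(1)])
        also have "u \<bullet> unit_vec n 0 = unit_vec n 0 \<bullet> u" by (rule comm_scalar_prod[OF u(1) e])
        finally show ?thesis by simp
      qed
      then show ?thesis using u n by (simp add: scalar_prod_left_unit)
    qed
    then have cw: "c * (1 - u$0) = 1" using False by (simp add: c_def field_simps)
    show ?thesis
    proof (rule eq_vecI)
      fix i assume "i < dim_vec u"
      then have i: "i < n" using u by simp
      have "(H *\<^sub>v unit_vec n 0) $ i = (\<Sum>k<n. H $$ (i,k) * unit_vec n 0 $ k)"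
        using i H by (simp add: scalar_prod_def lessThan_atLeast0 row_def)
      also have "\<dots> = H $$ (i, 0)"
        using i n by (simp add: if_distrib[of "\<lambda>x. _ * x"] cong: if_cong)
      also have "\<dots> = (if i = 0 then 1 else 0) - c * w$i * (1 - u$0)" using i n w0 by (simp add: H_def)
      also have "\<dots> = (if i = 0 then 1 else 0) - w$i"
        by (metis cw mult.commute mult.left_commute mult.right_neutral)
      also have "\<dots> = u $ i" using i n u by (simp add: w_def)
      finally show "(H *\<^sub>v unit_vec n 0) $ i = u $ i" .
    qed (use u H in auto)
  qed
  show ?thesis using H HT HH He by blast
qed

lemma mat_unit_index:
  fixes M :: "'a::comm_ring_1 mat"
  assumes "M \<in> carrier_mat n n" "i < n" "j < n"
  shows "(M *\<^sub>v unit_vec n j) $ i = M $$ (i, j)"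
  using assms by (simp add: scalar_prod_def row_def if_distrib[of "\<lambda>x. _ * x"] cong: if_cong)

lemma spectral:
  fixes A :: "real mat"
  assumes "A \<in> carrier_mat n n" "A\<^sup>T = A"
  shows "\<exists>U D. U \<in> carrier_mat n n \<and> D \<in> carrier_mat n n \<and> U\<^sup>T * U = 1\<^sub>m n \<and> U * U\<^sup>T = 1\<^sub>m n
     \<and> diagonal_mat D \<and> A = U * D * U\<^sup>T"
  using assms
proof (induction n arbitrary: A)
  case 0
  then show ?case
    by (intro exI[of _ "1\<^sub>m 0"] exI[of _ A]) (auto simp: diagonal_mat_def)
next
  case (Suc m)
  note A = Suc.prems(1) and sym = Suc.prems(2)
  let ?n = "Suc m"
  obtain e v where v: "v \<in> carrier_vec ?n" "v \<noteq> 0\<^sub>v ?n" "A *\<^sub>v v = e \<cdot>\<^sub>v v"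
    using real_sym_has_eigenvalue[OF A sym] by auto
  have vv: "v \<bullet> v > 0"
  proof -
    have "v \<bullet> v \<ge> 0" using v(1) by (simp add: scalar_prod_def sum_nonneg)
    moreover have "v \<bullet> v \<noteq> 0" using sum_sq_zero_iff_vec[OF v(1)] v(2) by auto
    ultimately show ?thesis by simp
  qed
  define u where "u = (1 / sqrt (v \<bullet> v)) \<cdot>\<^sub>v v"
  have u: "u \<in> carrier_vec ?n" using v by (simp add: u_def)
  have uu: "u \<bullet> u = 1"
  proof -
    have "u \<bullet> u = (1 / sqrt (v \<bullet> v)) * ((1 / sqrt (v \<bullet> v)) * (v \<bullet> v))"
      unfolding u_def using v(1) by (simp add: smult_scalar_prod_distrib[of v "Suc m"] scalar_prod_smult_distrib[of v "Suc m"])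
    also have "\<dots> = 1" using vv by (simp add: field_simps)
    finally show ?thesis .
  qed
  have Au: "A *\<^sub>v u = e \<cdot>\<^sub>v u"
    unfolding u_def using A v by (simp add: mult_mat_vec[OF A v(1)] smult_smult_assoc mult.commute)
  obtain H where H: "H \<in> carrier_mat ?n ?n" "H\<^sup>T = H" "H * H = 1\<^sub>m ?n" "H *\<^sub>v unit_vec ?n 0 = u"
    using householder[OF u uu] by auto
  define A' where "A' = H * A * H"
  have A': "A' \<in> carrier_mat ?n ?n" using A H by (simp add: A'_def)
  have A'T: "A'\<^sup>T = A'"
  proof -
    have "A'\<^sup>T = H\<^sup>T * (H * A)\<^sup>T" unfolding A'_def using A H by (intro transpose_mult) auto
    also have "(H * A)\<^sup>T = A\<^sup>T * H\<^sup>T" using A H by (intro transpose_mult) auto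
    also have "H\<^sup>T * (A\<^sup>T * H\<^sup>T) = A'" unfolding A'_def H(2) sym using A H
      by (simp add: assoc_mult_mat[of H ?n ?n A ?n H ?n])
    finally show ?thesis .
  qed
  have A'e: "A' *\<^sub>v unit_vec ?n 0 = e \<cdot>\<^sub>v unit_vec ?n 0"
  proof -
    have "A' *\<^sub>v unit_vec ?n 0 = H *\<^sub>v (A *\<^sub>v (H *\<^sub>v unit_vec ?n 0))"
      unfolding A'_def using A H by (simp add: assoc_mult_mat_vec[of _ ?n ?n _ ?n])
    also have "\<dots> = e \<cdot>\<^sub>v (H *\<^sub>v u)" using H Au u by (simp add: mult_mat_vec)
    also have "H *\<^sub>v u = (H * H) *\<^sub>v unit_vec ?n 0"
      unfolding H(4)[symmetric] by (rule assoc_mult_mat_vec[of H ?n ?n H ?n, symmetric]) (use H(1) in auto)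
    finally show ?thesis using H by simp
  qed
  have col0: "A' $$ (i, 0) = (if i = 0 then e else 0)" if "i < ?n" for i
    using mat_unit_index[OF A' that, of 0] A'e that by (simp split: if_splits)
  have row0: "A' $$ (0, j) = (if j = 0 then e else 0)" if "j < ?n" for j
    using col0[OF that] A'T A' that by (metis carrier_matD index_transpose_mat(1) zero_less_Suc)
  define A3 where "A3 = mat m m (\<lambda>(i,j). A' $$ (Suc i, Suc j))"
  define A1 where "A1 = mat 1 1 (\<lambda>_. e)"
  have A3: "A3 \<in> carrier_mat m m" by (simp add: A3_def)
  have A1: "A1 \<in> carrier_mat 1 1" by (simp add: A1_def)
  have A3T: "A3\<^sup>T = A3"
    using A'T A' by (intro eq_matI) (auto simp: A3_def, metis carrier_matD index_transpose_mat(1) Suc_less_eq)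
  have A'blk: "A' = four_block_mat A1 (0\<^sub>m 1 m) (0\<^sub>m m 1) A3"
    by (rule eq_matI) (use A' col0 row0 in \<open>auto simp: A1_def A3_def\<close>)
  obtain U3 D3 where U3: "U3 \<in> carrier_mat m m" "D3 \<in> carrier_mat m m" "U3\<^sup>T * U3 = 1\<^sub>m m"
    "U3 * U3\<^sup>T = 1\<^sub>m m" "diagonal_mat D3" "A3 = U3 * D3 * U3\<^sup>T"
    using Suc.IH[OF A3 A3T] by blast
  define F where "F = four_block_mat (1\<^sub>m 1) (0\<^sub>m 1 m) (0\<^sub>m m 1) U3"
  define D where "D = four_block_mat A1 (0\<^sub>m 1 m) (0\<^sub>m m 1) D3"
  have F: "F \<in> carrier_mat ?n ?n"
    using four_block_carrier_mat[of "1\<^sub>m 1" 1 1 U3 m m "0\<^sub>m 1 m" "0\<^sub>m m 1"] U3 by (simp add: F_def)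
  have D: "D \<in> carrier_mat ?n ?n"
    using four_block_carrier_mat[of A1 1 1 D3 m m "0\<^sub>m 1 m" "0\<^sub>m m 1"] U3 A1 by (simp add: D_def)
  have FT: "F\<^sup>T = four_block_mat (1\<^sub>m 1) (0\<^sub>m 1 m) (0\<^sub>m m 1) U3\<^sup>T"
    unfolding F_def using U3 by (simp add: transpose_four_block_mat[of _ 1 1 _ m _ m])
  have FTF: "F\<^sup>T * F = 1\<^sub>m ?n"
    unfolding FT unfolding F_def using U3
    by (simp add: mult_four_block_mat[of _ 1 1 _ m _ m _ _ 1 _ m])
  have FFT: "F * F\<^sup>T = 1\<^sub>m ?n"
    unfolding FT unfolding F_def using U3
    by (simp add: mult_four_block_mat[of _ 1 1 _ m _ m _ _ 1 _ m])
  have FDFT: "F * D * F\<^sup>T = A'"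
    unfolding FT unfolding F_def D_def A'blk U3(6) using U3 A1
    by (simp add: mult_four_block_mat[of _ 1 1 _ m _ m _ _ 1 _ m])
  define U where "U = H * F"
  have U: "U \<in> carrier_mat ?n ?n" using H F by (simp add: U_def)
  have UT: "U\<^sup>T = F\<^sup>T * H" unfolding U_def using H F by (simp add: transpose_mult[of H ?n ?n F])
  have "U\<^sup>T * U = F\<^sup>T * (H * H) * F"
    unfolding UT unfolding U_def using H(1) F
    by (simp add: assoc_mult_mat[of _ ?n ?n _ ?n _ ?n])
  also have "\<dots> = 1\<^sub>m ?n" using H F FTF by simp
  finally have UTU: "U\<^sup>T * U = 1\<^sub>m ?n" .
  have "U * U\<^sup>T = H * (F * F\<^sup>T) * H"
    unfolding UT unfolding U_def using H(1) F
    by (simp add: assoc_mult_mat[of _ ?n ?n _ ?n _ ?n])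
  also have "\<dots> = 1\<^sub>m ?n" using H F FFT by simp
  finally have UUT: "U * U\<^sup>T = 1\<^sub>m ?n" .
  have "U * D * U\<^sup>T = H * (F * D * F\<^sup>T) * H"
    unfolding UT unfolding U_def using H(1) F D
    by (simp add: assoc_mult_mat[of _ ?n ?n _ ?n _ ?n])
  also have "\<dots> = (H * H) * A * (H * H)"
    unfolding FDFT A'_def using H(1) A
    by (simp add: assoc_mult_mat[of _ ?n ?n _ ?n _ ?n])
  also have "\<dots> = A" using H A by simp
  finally have AUDU: "A = U * D * U\<^sup>T" by simp
  have Ddiag: "diagonal_mat D"
    using U3(5) U3(2) unfolding diagonal_mat_def D_def A1_def by auto
  show ?case using U D UTU UUT Ddiag AUDU by blast
qed

lemma mat_vec_zero: "A \<in> carrier_mat nr n \<Longrightarrow> A *\<^sub>v 0\<^sub>v n = (0\<^sub>v nr :: 'a::comm_ring_1 vec)"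
  by (intro eq_vecI) (auto simp: scalar_prod_def)

lemma qf_conj:
  fixes U M :: "real mat"
  assumes U: "U \<in> carrier_mat n n" and M: "M \<in> carrier_mat n n" and x: "x \<in> carrier_vec n"
  shows "x \<bullet> ((U * M * U\<^sup>T) *\<^sub>v x) = (U\<^sup>T *\<^sub>v x) \<bullet> (M *\<^sub>v (U\<^sup>T *\<^sub>v x))"
proof -
  have "(U * M * U\<^sup>T) *\<^sub>v x = U *\<^sub>v (M *\<^sub>v (U\<^sup>T *\<^sub>v x))"
    using U M x by (simp add: assoc_mult_mat_vec[of _ n n _ n])
  then show ?thesis
    using transpose_vec_mult_scalar[OF U, of "M *\<^sub>v (U\<^sup>T *\<^sub>v x)" x] U M x by simp
qed

lemma orth_conj_mult:
  fixes U X Y :: "real mat"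
  assumes U: "U \<in> carrier_mat n n" "U\<^sup>T * U = 1\<^sub>m n" and X: "X \<in> carrier_mat n n" and Y: "Y \<in> carrier_mat n n"
  shows "(U * X * U\<^sup>T) * (U * Y * U\<^sup>T) = U * (X * Y) * U\<^sup>T"
proof -
  have UU: "U\<^sup>T * (U * Z) = Z" if "Z \<in> carrier_mat n n" for Z
    using U that by (simp add: assoc_mult_mat[of "U\<^sup>T" n n U n Z n, symmetric])
  show ?thesis using U X Y
    by (simp add: assoc_mult_mat[of _ n n _ n _ n] UU)
qed

lemma diag_unit:
  fixes D :: "real mat"
  assumes D: "D \<in> carrier_mat n n" "diagonal_mat D" and i: "i < n"
  shows "D *\<^sub>v unit_vec n i = D $$ (i,i) \<cdot>\<^sub>v unit_vec n i"
  by (rule eq_vecI) (use assms in \<open>auto simp: mat_unit_index diagonal_mat_def\<close>)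

lemma orth_inj:
  fixes U :: "real mat"
  assumes U: "U \<in> carrier_mat n n" "U\<^sup>T * U = 1\<^sub>m n" and x: "x \<in> carrier_vec n" "U *\<^sub>v x = 0\<^sub>v n"
  shows "x = 0\<^sub>v n"
proof -
  have "x = (U\<^sup>T * U) *\<^sub>v x" using U x by simp
  also have "\<dots> = U\<^sup>T *\<^sub>v (U *\<^sub>v x)" by (rule assoc_mult_mat_vec[of "U\<^sup>T" n n U n]) (use U x in auto)
  also have "U\<^sup>T *\<^sub>v (U *\<^sub>v x) = 0\<^sub>v n" using x(2) U by (intro eq_vecI) (auto simp: scalar_prod_def)
  finally show ?thesis .
qed

lemma spectral_pos:
  fixes A U D :: "real mat"
  assumes A: "sym_pos_def n A" and U: "U \<in> carrier_mat n n" "U\<^sup>T * U = 1\<^sub>m n"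
    and D: "D \<in> carrier_mat n n" "diagonal_mat D" and AU: "A = U * D * U\<^sup>T" and i: "i < n"
  shows "D $$ (i,i) > 0"
proof -
  define x where "x = U *\<^sub>v unit_vec n i"
  have x: "x \<in> carrier_vec n" using U by (simp add: x_def)
  have x0: "x \<noteq> 0\<^sub>v n"
  proof
    assume "x = 0\<^sub>v n"
    then have "U *\<^sub>v unit_vec n i = 0\<^sub>v n" by (simp add: x_def)
    from orth_inj[OF U _ this] have "unit_vec n i = (0\<^sub>v n :: real vec)" by simp
    then show False using i by (metis index_unit_vec(2) index_zero_vec(1) zero_neq_one)
  qed
  have Utx: "U\<^sup>T *\<^sub>v x = unit_vec n i"
    using U by (simp add: x_def assoc_mult_mat_vec[of _ n n _ n, symmetric])
  have "x \<bullet> (A *\<^sub>v x) > 0" using A x x0 by (simp add: sym_pos_def_def)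
  also have "x \<bullet> (A *\<^sub>v x) = unit_vec n i \<bullet> (D *\<^sub>v unit_vec n i)"
    unfolding AU using qf_conj[OF U(1) D(1) x] Utx by simp
  also have "\<dots> = D $$ (i,i)" using diag_unit[OF D i] i by simp
  finally show ?thesis .
qed

lemma spd_sqrt_exists:
  assumes A: "sym_pos_def n A"
  shows "\<exists>R B. sym_pos_def n R \<and> R * R = A \<and> B \<in> carrier_mat n n \<and> R * B = 1\<^sub>m n \<and> B * R = 1\<^sub>m n"
proof -
  have Ac: "A \<in> carrier_mat n n" "A\<^sup>T = A" using A by (auto simp: sym_pos_def_def)
  obtain U D where UD: "U \<in> carrier_mat n n" "D \<in> carrier_mat n n" "U\<^sup>T * U = 1\<^sub>m n" "U * U\<^sup>T = 1\<^sub>m n"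
    "diagonal_mat D" "A = U * D * U\<^sup>T"
    using spectral[OF Ac] by blast
  have dpos: "D $$ (i,i) > 0" if "i < n" for i
    using spectral_pos[OF A UD(1,3) UD(2,5,6) that] .
  define Dh where "Dh = mat n n (\<lambda>(i,j). if i = j then sqrt (D $$ (i,i)) else 0)"
  define Di where "Di = mat n n (\<lambda>(i,j). if i = j then 1 / sqrt (D $$ (i,i)) else 0)"
  have Dh: "Dh \<in> carrier_mat n n" and Di: "Di \<in> carrier_mat n n" by (auto simp: Dh_def Di_def)
  have prod_diag: "mat n n (\<lambda>(i,j). if i = j then a i else 0) * mat n n (\<lambda>(i,j). if i = j then b i else 0)
     = mat n n (\<lambda>(i,j). if i = j then a i * b i else (0::real))" for a b
    by (rule eq_matI) (auto simp: scalar_prod_def row_def col_def if_distrib[of "\<lambda>x. x * _"] cong: if_cong)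
  have DhDh: "Dh * Dh = D"
    unfolding Dh_def prod_diag
    by (rule eq_matI) (use UD(2,5) dpos in \<open>auto simp: diagonal_mat_def less_imp_le\<close>)
  have inv1: "sqrt (D $$ (i,i)) * (1 / sqrt (D $$ (i,i))) = 1" "(1 / sqrt (D $$ (i,i))) * sqrt (D $$ (i,i)) = 1"
    if "i < n" for i using dpos[OF that] by auto
  have dnz: "D $$ (i,i) \<noteq> 0" if "i < n" for i using dpos[OF that] by simp
  have DhDi: "Dh * Di = 1\<^sub>m n"
    unfolding Dh_def Di_def prod_diag
    by (rule eq_matI) (auto simp: inv1 dnz)
  have DiDh: "Di * Dh = 1\<^sub>m n"
    unfolding Dh_def Di_def prod_diag
    by (rule eq_matI) (auto simp: inv1 dnz)
  define R where "R = U * Dh * U\<^sup>T"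
  define B where "B = U * Di * U\<^sup>T"
  have R: "R \<in> carrier_mat n n" and B: "B \<in> carrier_mat n n" using UD Dh Di by (auto simp: R_def B_def)
  have RR: "R * R = A" unfolding R_def orth_conj_mult[OF UD(1,3) Dh Dh] DhDh UD(6) ..
  have RB: "R * B = 1\<^sub>m n" unfolding R_def B_def orth_conj_mult[OF UD(1,3) Dh Di] DhDi using UD by simp
  have BR: "B * R = 1\<^sub>m n" unfolding R_def B_def orth_conj_mult[OF UD(1,3) Di Dh] DiDh using UD by simp
  have DhT: "Dh\<^sup>T = Dh" by (rule eq_matI) (auto simp: Dh_def)
  have RT: "R\<^sup>T = R"
  proof -
    have "R\<^sup>T = (U\<^sup>T)\<^sup>T * (U * Dh)\<^sup>T" unfolding R_def using UD Dh by (intro transpose_mult) auto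
    also have "(U * Dh)\<^sup>T = Dh\<^sup>T * U\<^sup>T" using UD Dh by (intro transpose_mult) auto
    finally show ?thesis unfolding R_def DhT using UD Dh by (simp add: assoc_mult_mat[of _ n n _ n _ n])
  qed
  have Rpos: "x \<bullet> (R *\<^sub>v x) > 0" if x: "x \<in> carrier_vec n" "x \<noteq> 0\<^sub>v n" for x
  proof -
    define y where "y = U\<^sup>T *\<^sub>v x"
    have y: "y \<in> carrier_vec n" using UD x(1) by (simp add: y_def)
    have y0: "y \<noteq> 0\<^sub>v n"
    proof
      assume "y = 0\<^sub>v n"
      have "x = (U * U\<^sup>T) *\<^sub>v x" using UD x by simp
      also have "\<dots> = U *\<^sub>v y" unfolding y_def by (rule assoc_mult_mat_vec[of U n n "U\<^sup>T" n]) (use UD x in auto)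
      finally show False using \<open>y = 0\<^sub>v n\<close> x UD mat_vec_zero[of U n n] by simp
    qed
    obtain k where k: "k < n" "y $ k \<noteq> 0" using y y0 by (metis eq_vecI carrier_vecD index_zero_vec)
    have "x \<bullet> (R *\<^sub>v x) = y \<bullet> (Dh *\<^sub>v y)" unfolding R_def y_def using qf_conj[OF UD(1) Dh x(1)] .
    also have "\<dots> = (\<Sum>i<n. y $ i * (Dh *\<^sub>v y) $ i)" by (rule sp_index) (use Dh y in simp)
    also have "\<dots> = (\<Sum>i<n. sqrt (D $$ (i,i)) * (y $ i * y $ i))"
    proof (intro sum.cong refl)
      fix i assume i: "i \<in> {..<n}"
      have "(Dh *\<^sub>v y) $ i = (\<Sum>j<n. Dh $$ (i,j) * y $ j)" using mv_index[OF Dh y] i by simp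
      also have "\<dots> = (\<Sum>j<n. (if i = j then sqrt (D $$ (i,i)) * y $ j else 0))"
        by (intro sum.cong refl) (use i in \<open>auto simp: Dh_def\<close>)
      also have "\<dots> = sqrt (D $$ (i,i)) * y $ i" using i by simp
      finally show "y $ i * (Dh *\<^sub>v y) $ i = sqrt (D $$ (i,i)) * (y $ i * y $ i)" by simp
    qed
    also have "\<dots> > 0"
    proof (rule sum_pos2[of "{..<n}" k])
      show "0 < sqrt (D $$ (k, k)) * (y $ k * y $ k)" using dpos[OF k(1)] k(2) by (metis mult_pos_pos not_real_square_gt_zero real_sqrt_gt_0_iff)
      show "\<And>i. i \<in> {..<n} \<Longrightarrow> 0 \<le> sqrt (D $$ (i, i)) * (y $ i * y $ i)" using dpos by (metis lessThan_iff less_imp_le mult_nonneg_nonneg real_sqrt_ge_zero zero_le_square)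
    qed (use k in auto)
    finally show ?thesis .
  qed
  have "sym_pos_def n R" unfolding sym_pos_def_def using R RT Rpos by blast
  then show ?thesis using RR B RB BR by blast
qed

lemma spd_sqrt_unique:
  fixes S1 S2 :: "real mat"
  assumes S1: "sym_pos_def n S1" and S2: "sym_pos_def n S2" and eq: "S1 * S1 = S2 * S2"
  shows "S1 = S2"
proof -
  have S1c: "S1 \<in> carrier_mat n n" "S1\<^sup>T = S1" using S1 by (auto simp: sym_pos_def_def)
  have S2c: "S2 \<in> carrier_mat n n" using S2 by (auto simp: sym_pos_def_def)
  obtain U D where UD: "U \<in> carrier_mat n n" "D \<in> carrier_mat n n" "U\<^sup>T * U = 1\<^sub>m n" "U * U\<^sup>T = 1\<^sub>m n"
    "diagonal_mat D" "S1 = U * D * U\<^sup>T"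
    using spectral[OF S1c] by blast
  have col: "S2 *\<^sub>v (U *\<^sub>v unit_vec n i) = S1 *\<^sub>v (U *\<^sub>v unit_vec n i)" if i: "i < n" for i
  proof -
    define u where "u = U *\<^sub>v unit_vec n i"
    define d where "d = D $$ (i,i)"
    have u: "u \<in> carrier_vec n" using UD by (simp add: u_def)
    have d: "d > 0" unfolding d_def using spectral_pos[OF S1 UD(1,3) UD(2,5,6) i] .
    have Utu: "U\<^sup>T *\<^sub>v u = unit_vec n i"
      unfolding u_def by (subst assoc_mult_mat_vec[of "U\<^sup>T" n n U n, symmetric]) (use UD in auto)
    have S1u: "S1 *\<^sub>v u = d \<cdot>\<^sub>v u"
    proof -
      have "S1 *\<^sub>v u = U *\<^sub>v (D *\<^sub>v (U\<^sup>T *\<^sub>v u))"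
        unfolding UD(6) using UD u by (simp add: assoc_mult_mat_vec[of _ n n _ n])
      also have "\<dots> = U *\<^sub>v (d \<cdot>\<^sub>v unit_vec n i)" unfolding Utu d_def using diag_unit[OF UD(2,5) i] by simp
      also have "\<dots> = d \<cdot>\<^sub>v u" unfolding u_def using UD by (simp add: mult_mat_vec)
      finally show ?thesis .
    qed
    define a where "a = S2 *\<^sub>v u"
    have a: "a \<in> carrier_vec n" using S2c u by (simp add: a_def)
    have S2a: "S2 *\<^sub>v a = (d * d) \<cdot>\<^sub>v u"
    proof -
      have "S2 *\<^sub>v a = (S2 * S2) *\<^sub>v u" unfolding a_def by (rule assoc_mult_mat_vec[symmetric, of S2 n n S2 n u]) (use S2c u in auto)
      also have "\<dots> = S1 *\<^sub>v (S1 *\<^sub>v u)" unfolding eq[symmetric] by (rule assoc_mult_mat_vec[of S1 n n S1 n u]) (use S1c u in auto)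
      also have "\<dots> = (d * d) \<cdot>\<^sub>v u" unfolding S1u using S1c u by (simp add: mult_mat_vec S1u smult_smult_assoc)
      finally show ?thesis .
    qed
    define y where "y = a - d \<cdot>\<^sub>v u"
    have y: "y \<in> carrier_vec n" using a u by (simp add: y_def)
    have S2y: "S2 *\<^sub>v y = (- d) \<cdot>\<^sub>v y"
    proof -
      have "S2 *\<^sub>v y = S2 *\<^sub>v a - d \<cdot>\<^sub>v (S2 *\<^sub>v u)"
        unfolding y_def using S2c a u by (simp add: mult_minus_distrib_mat_vec mult_mat_vec)
      also have "\<dots> = (- d) \<cdot>\<^sub>v y"
        unfolding S2a y_def a_def[symmetric] by (rule eq_vecI) (use u a in \<open>auto simp: algebra_simps\<close>)
      finally show ?thesis .
    qed
    have "y = 0\<^sub>v n"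
    proof (rule ccontr)
      assume "y \<noteq> 0\<^sub>v n"
      then have "y \<bullet> (S2 *\<^sub>v y) > 0" using S2 y by (simp add: sym_pos_def_def)
      moreover have "y \<bullet> (S2 *\<^sub>v y) = - d * (y \<bullet> y)" unfolding S2y using y by simp
      moreover have "y \<bullet> y \<ge> 0" using y by (simp add: scalar_prod_def sum_nonneg)
      ultimately show False using d mult_nonneg_nonneg[of d "y \<bullet> y"] by linarith
    qed
    then have "a = d \<cdot>\<^sub>v u"
    proof (intro eq_vecI)
      fix j assume "y = 0\<^sub>v n" "j < dim_vec (d \<cdot>\<^sub>v u)"
      then have "y $ j = 0" "j < n" using u by auto
      then show "a $ j = (d \<cdot>\<^sub>v u) $ j" using a u by (simp add: y_def)
    qed (use a u in auto)
    then show ?thesis using S1u by (simp add: a_def u_def)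
  qed
  have SU: "S2 * U = S1 * U"
  proof (rule eq_matI)
    fix j i assume ji: "j < dim_row (S1 * U)" "i < dim_col (S1 * U)"
    then have j: "j < n" and i: "i < n" using S1c UD by auto
    have "(S2 * U) $$ (j,i) = ((S2 * U) *\<^sub>v unit_vec n i) $ j" using mat_unit_index[of "S2 * U" n j i] S2c UD i j by simp
    also have "\<dots> = (S2 *\<^sub>v (U *\<^sub>v unit_vec n i)) $ j" using S2c UD by (simp add: assoc_mult_mat_vec[of _ n n _ n])
    also have "\<dots> = (S1 *\<^sub>v (U *\<^sub>v unit_vec n i)) $ j" using col[OF i] by simp
    also have "\<dots> = ((S1 * U) *\<^sub>v unit_vec n i) $ j" using S1c UD by (simp add: assoc_mult_mat_vec[of _ n n _ n])
    also have "\<dots> = (S1 * U) $$ (j,i)" using mat_unit_index[of "S1 * U" n j i] S1c UD i j by simp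
    finally show "(S2 * U) $$ (j,i) = (S1 * U) $$ (j,i)" .
  qed (use S1c S2c UD in auto)
  have "S2 = S2 * U * U\<^sup>T" using S2c UD by (simp add: assoc_mult_mat[of S2 n n U n "U\<^sup>T" n])
  also have "\<dots> = S1 * U * U\<^sup>T" using SU by simp
  also have "\<dots> = S1 * (U * U\<^sup>T)" by (rule assoc_mult_mat[of S1 n n U n "U\<^sup>T" n]) (use S1c UD in auto)
  also have "\<dots> = S1" using S1c UD(4) by simp
  finally show ?thesis by simp
qed

lemma spd_resolve:
  assumes A: "sym_pos_def n A"
  shows "sym_pos_def n (spd_sqrt n A) \<and> spd_sqrt n A * spd_sqrt n A = A \<and>
    spd_inv_sqrt n A \<in> carrier_mat n n \<and> spd_sqrt n A * spd_inv_sqrt n A = 1\<^sub>m n \<and>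
    spd_inv_sqrt n A * spd_sqrt n A = 1\<^sub>m n"
proof -
  obtain R B where RB: "sym_pos_def n R" "R * R = A" "B \<in> carrier_mat n n" "R * B = 1\<^sub>m n" "B * R = 1\<^sub>m n"
    using spd_sqrt_exists[OF A] by blast
  have Rc: "R \<in> carrier_mat n n" using RB(1) by (simp add: sym_pos_def_def)
  have sq: "spd_sqrt n A = R"
    unfolding spd_sqrt_def
  proof (rule the_equality)
    show "sym_pos_def n R \<and> R * R = A" using RB by simp
    fix S assume "sym_pos_def n S \<and> S * S = A"
    then show "S = R" using spd_sqrt_unique[of n S R] RB by auto
  qed
  have inv: "mat_inv n R = B"
    unfolding mat_inv_def
  proof (rule the_equality)
    show "B \<in> carrier_mat n n \<and> R * B = 1\<^sub>m n \<and> B * R = 1\<^sub>m n" using RB by simp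
    fix B' assume B': "B' \<in> carrier_mat n n \<and> R * B' = 1\<^sub>m n \<and> B' * R = 1\<^sub>m n"
    have "B' = B' * (R * B)" using B' RB by (simp add: right_mult_one_mat[of B' n n])
    also have "\<dots> = (B' * R) * B" using B' RB Rc by (intro assoc_mult_mat[of B' n n R n B n, symmetric]) auto
    also have "\<dots> = B" using B' RB by simp
    finally show "B' = B" .
  qed
  show ?thesis unfolding spd_inv_sqrt_def sq inv using RB by simp
qed

lemma re_fc:
  fixes g :: "real \<Rightarrow> complex" and k :: int
  assumes g: "set_integrable lborel {-pi..pi} g"
  shows "integrable lborel (\<lambda>t. indicator {-pi..pi} t * (Re (g t) * cos (of_int k * t) + Im (g t) * sin (of_int k * t)))"
    and "Re (fourier_coeff g k) = (1/(2*pi)) *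
          integral\<^sup>L lborel (\<lambda>t. indicator {-pi..pi} t * (Re (g t) * cos (of_int k * t) + Im (g t) * sin (of_int k * t)))"
proof -
  have gi: "integrable lborel (\<lambda>t. indicator {-pi..pi} t *\<^sub>R g t)" using g by (simp add: set_integrable_def)
  define e where "e t = exp (- (\<i> * of_int k * complex_of_real t))" for t
  have e: "e t = cis (- (of_int k * t))" for t
    by (simp add: e_def cis_conv_exp mult.assoc)
  have [measurable]: "(\<lambda>t. indicator {-pi..pi} t *\<^sub>R g t) \<in> borel_measurable lborel"
    using gi by (rule borel_measurable_integrable)
  have [measurable]: "e \<in> borel_measurable lborel"
    unfolding e_def by measurable
  have int2: "integrable lborel (\<lambda>t. (indicator {-pi..pi} t *\<^sub>R g t) * e t)"
  proof (rule Bochner_Integration.integrable_bound[OF gi])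
    show "(\<lambda>t. (indicator {-pi..pi} t *\<^sub>R g t) * e t) \<in> borel_measurable lborel" by measurable
  qed (auto simp: e norm_mult)
  have fc: "fourier_coeff g k = complex_of_real (1/(2*pi)) * integral\<^sup>L lborel (\<lambda>t. (indicator {-pi..pi} t *\<^sub>R g t) * e t)"
    unfolding fourier_coeff_def set_lebesgue_integral_def e_def
    by (simp add: mult_scaleR_left)
  have re: "Re ((indicator {-pi..pi} t *\<^sub>R g t) * e t) =
      indicator {-pi..pi} t * (Re (g t) * cos (of_int k * t) + Im (g t) * sin (of_int k * t))" for t
    by (simp add: e algebra_simps)
  show "integrable lborel (\<lambda>t. indicator {-pi..pi} t * (Re (g t) * cos (of_int k * t) + Im (g t) * sin (of_int k * t)))"
    using integrable_Re[OF int2] unfolding re .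
  show "Re (fourier_coeff g k) = (1/(2*pi)) *
          integral\<^sup>L lborel (\<lambda>t. indicator {-pi..pi} t * (Re (g t) * cos (of_int k * t) + Im (g t) * sin (of_int k * t)))"
    unfolding fc re[symmetric] integral_Re[OF int2] by simp
qed

definition cosF :: "nat \<Rightarrow> real vec \<Rightarrow> real \<Rightarrow> real" where
  "cosF n a t = (\<Sum>i<n. a $ i * cos (real i * t))"
definition sinF :: "nat \<Rightarrow> real vec \<Rightarrow> real \<Rightarrow> real" where
  "sinF n a t = (\<Sum>i<n. a $ i * sin (real i * t))"

lemma trig_cos:
  "(\<Sum>i<n. \<Sum>j<n. a $ i * b $ j * cos ((real i - real j) * t)) = cosF n a t * cosF n b t + sinF n a t * sinF n b t"
proof -
  have "(\<Sum>i<n. \<Sum>j<n. a $ i * b $ j * cos ((real i - real j) * t)) =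
        (\<Sum>i<n. \<Sum>j<n. a $ i * cos (real i * t) * (b $ j * cos (real j * t)) + a $ i * sin (real i * t) * (b $ j * sin (real j * t)))"
    by (intro sum.cong refl) (simp add: left_diff_distrib cos_diff algebra_simps)
  also have "\<dots> = cosF n a t * cosF n b t + sinF n a t * sinF n b t"
    unfolding cosF_def sinF_def sum_product sum.distrib ..
  finally show ?thesis .
qed

lemma trig_sin:
  "(\<Sum>i<n. \<Sum>j<n. a $ i * b $ j * sin ((real i - real j) * t)) = sinF n a t * cosF n b t - cosF n a t * sinF n b t"
proof -
  have "(\<Sum>i<n. \<Sum>j<n. a $ i * b $ j * sin ((real i - real j) * t)) =
        (\<Sum>i<n. \<Sum>j<n. a $ i * sin (real i * t) * (b $ j * cos (real j * t)) - a $ i * cos (real i * t) * (b $ j * sin (real j * t)))"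
    by (intro sum.cong refl) (simp add: left_diff_distrib sin_diff algebra_simps)
  also have "\<dots> = sinF n a t * cosF n b t - cosF n a t * sinF n b t"
    unfolding cosF_def sinF_def sum_product sum_subtractf ..
  finally show ?thesis .
qed

lemma bilin:
  fixes M :: "real mat" and c :: real and G :: "nat \<Rightarrow> nat \<Rightarrow> real \<Rightarrow> real"
  assumes M: "M \<in> carrier_mat n n" "\<And>i j. i < n \<Longrightarrow> j < n \<Longrightarrow> M $$ (i,j) = c * integral\<^sup>L lborel (G i j)"
    and int: "\<And>i j. i < n \<Longrightarrow> j < n \<Longrightarrow> integrable lborel (G i j)"
    and a: "a \<in> carrier_vec n" and b: "b \<in> carrier_vec n"
  shows "a \<bullet> (M *\<^sub>v b) = c * integral\<^sup>L lborel (\<lambda>t. \<Sum>i<n. \<Sum>j<n. a $ i * b $ j * G i j t)"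
    and "integrable lborel (\<lambda>t. \<Sum>i<n. \<Sum>j<n. a $ i * b $ j * G i j t)"
proof -
  have "a \<bullet> (M *\<^sub>v b) = (\<Sum>i<n. a $ i * (M *\<^sub>v b) $ i)"
    by (rule sp_index) (use M b in simp)
  also have "\<dots> = (\<Sum>i<n. \<Sum>j<n. c * integral\<^sup>L lborel (\<lambda>t. a $ i * b $ j * G i j t))"
  proof (intro sum.cong refl)
    fix i assume i: "i \<in> {..<n}"
    have "(M *\<^sub>v b) $ i = (\<Sum>j<n. M $$ (i,j) * b $ j)" using mv_index[OF M(1) b] i by simp
    then show "a $ i * (M *\<^sub>v b) $ i = (\<Sum>j<n. c * integral\<^sup>L lborel (\<lambda>t. a $ i * b $ j * G i j t))"
      using i M(2) by (simp add: sum_distrib_left algebra_simps)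
  qed
  also have "\<dots> = c * integral\<^sup>L lborel (\<lambda>t. \<Sum>i<n. \<Sum>j<n. a $ i * b $ j * G i j t)"
  proof -
    have ii: "integrable lborel (\<lambda>t. a $ i * b $ j * G i j t)" if "i < n" "j < n" for i j
      using int[OF that] by simp
    have "integral\<^sup>L lborel (\<lambda>t. \<Sum>i<n. \<Sum>j<n. a $ i * b $ j * G i j t) =
          (\<Sum>i<n. integral\<^sup>L lborel (\<lambda>t. \<Sum>j<n. a $ i * b $ j * G i j t))"
      by (rule Bochner_Integration.integral_sum) (use ii in auto)
    also have "\<dots> = (\<Sum>i<n. \<Sum>j<n. integral\<^sup>L lborel (\<lambda>t. a $ i * b $ j * G i j t))"
      by (intro sum.cong refl Bochner_Integration.integral_sum) (use ii in auto)
    finally show ?thesis by (simp add: sum_distrib_left)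
  qed
  finally show "a \<bullet> (M *\<^sub>v b) = c * integral\<^sup>L lborel (\<lambda>t. \<Sum>i<n. \<Sum>j<n. a $ i * b $ j * G i j t)" .
  show "integrable lborel (\<lambda>t. \<Sum>i<n. \<Sum>j<n. a $ i * b $ j * G i j t)"
    using int by (intro Bochner_Integration.integrable_sum integrable_mult_right) auto
qed

lemma key_ineq:
  fixes a b c d s :: real
  assumes "s \<ge> 0"
  shows "2 * s * \<bar>b * c - a * d\<bar> \<le> a\<^sup>2 + b\<^sup>2 + s\<^sup>2 * (c\<^sup>2 + d\<^sup>2)"
proof -
  have h1: "0 \<le> (b - s * c)\<^sup>2 + (a + s * d)\<^sup>2" by simp
  have h2: "0 \<le> (b + s * c)\<^sup>2 + (a - s * d)\<^sup>2" by simp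
  have e1: "(b - s * c)\<^sup>2 + (a + s * d)\<^sup>2 = a\<^sup>2 + b\<^sup>2 + s\<^sup>2 * (c\<^sup>2 + d\<^sup>2) - 2 * s * (b * c - a * d)"
    by (simp add: power2_eq_square algebra_simps)
  have e2: "(b + s * c)\<^sup>2 + (a - s * d)\<^sup>2 = a\<^sup>2 + b\<^sup>2 + s\<^sup>2 * (c\<^sup>2 + d\<^sup>2) + 2 * s * (b * c - a * d)"
    by (simp add: power2_eq_square algebra_simps)
  show ?thesis
  proof (cases "b * c - a * d \<ge> 0")
    case True
    then have "\<bar>b * c - a * d\<bar> = b * c - a * d" by simp
    then show ?thesis using h1 e1 by simp
  next
    case False
    then have "\<bar>b * c - a * d\<bar> = - (b * c - a * d)" by simp
    then have "2 * s * \<bar>b * c - a * d\<bar> = - (2 * s * (b * c - a * d))" by (simp add: algebra_simps)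
    then show ?thesis using h2 e2 by linarith
  qed
qed

lemma exch_carrier: "exchange_mat n \<in> carrier_mat n n"
  by (simp add: exchange_mat_def)

lemma exch_T: "(exchange_mat n)\<^sup>T = exchange_mat n"
  by (rule eq_matI) (auto simp: exchange_mat_def)

lemma exch_left:
  fixes M :: "real mat"
  assumes M: "M \<in> carrier_mat n m" and i: "i < n" and j: "j < m"
  shows "(exchange_mat n * M) $$ (i,j) = M $$ (n - 1 - i, j)"
proof -
  have "(exchange_mat n * M) $$ (i,j) = (\<Sum>k<n. exchange_mat n $$ (i,k) * M $$ (k,j))"
    using M i j by (simp add: exchange_mat_def scalar_prod_def row_def col_def lessThan_atLeast0)
  also have "\<dots> = (\<Sum>k<n. if k = n - 1 - i then M $$ (k,j) else 0)"
    by (intro sum.cong refl) (use i in \<open>auto simp: exchange_mat_def\<close>)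
  also have "\<dots> = M $$ (n - 1 - i, j)" using i by simp
  finally show ?thesis .
qed

lemma exch_right:
  fixes M :: "real mat"
  assumes M: "M \<in> carrier_mat m n" and i: "i < m" and j: "j < n"
  shows "(M * exchange_mat n) $$ (i,j) = M $$ (i, n - 1 - j)"
proof -
  have "(M * exchange_mat n) $$ (i,j) = (\<Sum>k<n. M $$ (i,k) * exchange_mat n $$ (k,j))"
    using M i j by (simp add: exchange_mat_def scalar_prod_def row_def col_def lessThan_atLeast0)
  also have "\<dots> = (\<Sum>k<n. if k = n - 1 - j then M $$ (i,k) else 0)"
    by (intro sum.cong refl) (use j in \<open>auto simp: exchange_mat_def\<close>)
  also have "\<dots> = M $$ (i, n - 1 - j)" using j by simp
  finally show ?thesis .
qed

lemma exch_sq: "exchange_mat n * exchange_mat n = 1\<^sub>m n"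
proof (rule eq_matI)
  fix i j assume "i < dim_row (1\<^sub>m n)" "j < dim_col (1\<^sub>m n)"
  then have i: "i < n" and j: "j < n" by auto
  show "(exchange_mat n * exchange_mat n) $$ (i, j) = 1\<^sub>m n $$ (i, j)"
    using exch_left[OF exch_carrier i j] i j by (auto simp: exchange_mat_def)
qed (auto simp: exchange_mat_def)

lemma exch_conj:
  fixes M :: "real mat"
  assumes M: "M \<in> carrier_mat n n" and i: "i < n" and j: "j < n"
  shows "(exchange_mat n * M * exchange_mat n) $$ (i,j) = M $$ (n - 1 - i, n - 1 - j)"
proof -
  have YM: "exchange_mat n * M \<in> carrier_mat n n" using mult_carrier_mat[OF exch_carrier M] .
  show ?thesis using exch_right[OF YM i j] exch_left[OF M i] j by simp
qed

lemma countable_cis_preimage: "countable {t. cis t = z}"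
proof (cases "\<exists>t0. cis t0 = z")
  case False then have "{t. cis t = z} = {}" by auto
  then show ?thesis by simp
next
  case True
  then obtain t0 where t0: "cis t0 = z" by blast
  have "{t. cis t = z} \<subseteq> range (\<lambda>m::int. t0 + real_of_int m * 2 * pi)"
  proof
    fix t assume "t \<in> {t. cis t = z}"
    have "cis (t - t0) = cis t / cis t0" by (simp add: cis_divide)
    then have "cis (t - t0) = 1" using t0 \<open>t \<in> {t. cis t = z}\<close> cis_neq_zero[of t0] by simp
    then have "Re (cis (t - t0)) = 1" by simp
    then have "cos (t - t0) = 1" by simp
    then obtain m :: int where "t - t0 = real_of_int m * 2 * pi" using cos_one_2pi_int by blast
    then show "t \<in> range (\<lambda>m::int. t0 + real_of_int m * 2 * pi)" by (intro image_eqI[of _ _ m]) auto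
  qed
  then show ?thesis by (rule countable_subset) simp
qed

lemma trig_zero_countable:
  fixes v :: "real vec"
  assumes v: "v \<in> carrier_vec n" "v \<noteq> 0\<^sub>v n"
  shows "countable {t. (cosF n v t)\<^sup>2 + (sinF n v t)\<^sup>2 = 0}"
proof -
  define p where "p = (\<Sum>j<n. monom (complex_of_real (v $ j)) j)"
  obtain k where k: "k < n" "v $ k \<noteq> 0" using v by (metis eq_vecI carrier_vecD index_zero_vec)
  have "coeff p k = complex_of_real (v $ k)"
    unfolding p_def coeff_sum by (simp add: coeff_monom k(1))
  then have p0: "p \<noteq> 0" using k by auto
  have pv: "poly p (cis t) = complex_of_real (cosF n v t) + \<i> * complex_of_real (sinF n v t)" for t
  proof -
    have "poly p (cis t) = (\<Sum>j<n. complex_of_real (v $ j) * cis (real j * t))"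
      by (simp add: p_def poly_sum poly_monom Complex.DeMoivre)
    then show ?thesis by (intro complex_eqI) (simp_all add: Re_sum Im_sum cosF_def sinF_def)
  qed
  have sub: "{t. (cosF n v t)\<^sup>2 + (sinF n v t)\<^sup>2 = 0} \<subseteq> (\<Union>z\<in>{z. poly p z = 0}. {t. cis t = z})"
  proof
    fix t assume "t \<in> {t. (cosF n v t)\<^sup>2 + (sinF n v t)\<^sup>2 = 0}"
    then have "cosF n v t = 0" "sinF n v t = 0" by (auto simp: add_nonneg_eq_0_iff)
    then have "poly p (cis t) = 0" using pv by simp
    then show "t \<in> (\<Union>z\<in>{z. poly p z = 0}. {t. cis t = z})" by auto
  qed
  have "countable (\<Union>z\<in>{z. poly p z = 0}. {t. cis t = z})"
    using poly_roots_finite[OF p0] countable_cis_preimage by (intro countable_UN) (auto intro: countable_finite)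
  then show ?thesis using sub countable_subset by blast
qed

context
  fixes f :: "real \<Rightarrow> complex" and n :: nat
  assumes fint: "set_integrable lborel {-pi..pi} f"
begin

definition "CRf i j t = indicator {-pi..pi} t * (Re (f t) * cos ((real i - real j) * t))"
definition "CAf i j t = indicator {-pi..pi} t * (Re (f t) * cos ((real i - real j) * t) + Im (f t) * sin ((real i - real j) * t))"
definition "SIf i j t = indicator {-pi..pi} t * (Im (f t) * sin ((real i - real j) * t))"

lemma fR_int: "set_integrable lborel {-pi..pi} (\<lambda>t. complex_of_real (Re (f t)))"
proof -
  have gi: "integrable lborel (\<lambda>t. indicator {-pi..pi} t *\<^sub>R f t)" using fint by (simp add: set_integrable_def)
  have [measurable]: "(\<lambda>t. indicator {-pi..pi} t *\<^sub>R f t) \<in> borel_measurable lborel"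
    using gi by (rule borel_measurable_integrable)
  have eq: "(\<lambda>t. indicator {-pi..pi} t *\<^sub>R complex_of_real (Re (f t))) = (\<lambda>t. complex_of_real (Re (indicator {-pi..pi} t *\<^sub>R f t)))"
    by (auto simp: indicator_def)
  have "integrable lborel (\<lambda>t. complex_of_real (Re (indicator {-pi..pi} t *\<^sub>R f t)))"
  proof (rule Bochner_Integration.integrable_bound[OF gi])
    show "(\<lambda>t. complex_of_real (Re (indicator {-pi..pi} t *\<^sub>R f t))) \<in> borel_measurable lborel" by measurable
  qed (auto simp: norm_mult indicator_def abs_Re_le_cmod)
  then show ?thesis unfolding set_integrable_def eq .
qed

lemma AR_entry:
  assumes "i < n" "j < n"
  shows "map_mat Re (toeplitz n (\<lambda>t. complex_of_real (Re (f t)))) $$ (i,j) = (1/(2*pi)) * integral\<^sup>L lborel (CRf i j)"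
    and "integrable lborel (CRf i j)"
proof -
  have eq: "(\<lambda>t. indicator {-pi..pi} t * (Re (complex_of_real (Re (f t))) * cos (real_of_int (int i - int j) * t)
      + Im (complex_of_real (Re (f t))) * sin (real_of_int (int i - int j) * t))) = CRf i j"
    by (rule ext) (simp add: CRf_def)
  show "map_mat Re (toeplitz n (\<lambda>t. complex_of_real (Re (f t)))) $$ (i,j) = (1/(2*pi)) * integral\<^sup>L lborel (CRf i j)"
    using re_fc(2)[OF fR_int, of "int i - int j"] assms unfolding eq by (simp add: toeplitz_def)
  show "integrable lborel (CRf i j)"
    using re_fc(1)[OF fR_int, of "int i - int j"] unfolding eq .
qed

lemma A_entry:
  assumes "i < n" "j < n"
  shows "map_mat Re (toeplitz n f) $$ (i,j) = (1/(2*pi)) * integral\<^sup>L lborel (CAf i j)"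
    and "integrable lborel (CAf i j)"
proof -
  have eq: "(\<lambda>t. indicator {-pi..pi} t * (Re (f t) * cos (real_of_int (int i - int j) * t)
      + Im (f t) * sin (real_of_int (int i - int j) * t))) = CAf i j"
    by (rule ext) (simp add: CAf_def)
  show "map_mat Re (toeplitz n f) $$ (i,j) = (1/(2*pi)) * integral\<^sup>L lborel (CAf i j)"
    using re_fc(2)[OF fint, of "int i - int j"] assms unfolding eq by (simp add: toeplitz_def)
  show "integrable lborel (CAf i j)"
    using re_fc(1)[OF fint, of "int i - int j"] unfolding eq .
qed

lemma K_entry:
  assumes "i < n" "j < n"
  shows "(map_mat Re (toeplitz n f) - map_mat Re (toeplitz n (\<lambda>t. complex_of_real (Re (f t))))) $$ (i,j)
      = (1/(2*pi)) * integral\<^sup>L lborel (SIf i j)"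
    and "integrable lborel (SIf i j)"
proof -
  have eq: "SIf i j = (\<lambda>t. CAf i j t - CRf i j t)"
    by (rule ext) (simp add: SIf_def CAf_def CRf_def algebra_simps)
  show "integrable lborel (SIf i j)" unfolding eq using A_entry(2)[OF assms] AR_entry(2)[OF assms] by simp
  show "(map_mat Re (toeplitz n f) - map_mat Re (toeplitz n (\<lambda>t. complex_of_real (Re (f t))))) $$ (i,j)
      = (1/(2*pi)) * integral\<^sup>L lborel (SIf i j)"
    unfolding eq using assms A_entry[OF assms] AR_entry[OF assms]
    by (simp add: toeplitz_def right_diff_distrib)
qed

lemma AR_carrier: "map_mat Re (toeplitz n (\<lambda>t. complex_of_real (Re (f t)))) \<in> carrier_mat n n"
  by (simp add: toeplitz_def)

lemma A_carrier: "map_mat Re (toeplitz n f) \<in> carrier_mat n n"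
  by (simp add: toeplitz_def)

lemma K_carrier: "map_mat Re (toeplitz n f) - map_mat Re (toeplitz n (\<lambda>t. complex_of_real (Re (f t)))) \<in> carrier_mat n n"
  using minus_carrier_mat AR_carrier by blast

lemma qAR:
  assumes a: "a \<in> carrier_vec n" and b: "b \<in> carrier_vec n"
  shows "a \<bullet> (map_mat Re (toeplitz n (\<lambda>t. complex_of_real (Re (f t)))) *\<^sub>v b) =
      (1/(2*pi)) * integral\<^sup>L lborel (\<lambda>t. indicator {-pi..pi} t * (Re (f t) * (cosF n a t * cosF n b t + sinF n a t * sinF n b t)))"
    and "integrable lborel (\<lambda>t. indicator {-pi..pi} t * (Re (f t) * (cosF n a t * cosF n b t + sinF n a t * sinF n b t)))"
proof -
  have pw: "(\<lambda>t. \<Sum>i<n. \<Sum>j<n. a $ i * b $ j * CRf i j t) =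
      (\<lambda>t. indicator {-pi..pi} t * (Re (f t) * (cosF n a t * cosF n b t + sinF n a t * sinF n b t)))"
  proof
    fix t
    have "(\<Sum>i<n. \<Sum>j<n. a $ i * b $ j * CRf i j t) =
        indicator {-pi..pi} t * (Re (f t) * (\<Sum>i<n. \<Sum>j<n. a $ i * b $ j * cos ((real i - real j) * t)))"
      by (simp add: CRf_def sum_distrib_left algebra_simps)
    then show "(\<Sum>i<n. \<Sum>j<n. a $ i * b $ j * CRf i j t) =
        indicator {-pi..pi} t * (Re (f t) * (cosF n a t * cosF n b t + sinF n a t * sinF n b t))"
      by (simp only: trig_cos)
  qed
  note bl = bilin[OF AR_carrier AR_entry(1) AR_entry(2) a b]
  show "a \<bullet> (map_mat Re (toeplitz n (\<lambda>t. complex_of_real (Re (f t)))) *\<^sub>v b) =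
      (1/(2*pi)) * integral\<^sup>L lborel (\<lambda>t. indicator {-pi..pi} t * (Re (f t) * (cosF n a t * cosF n b t + sinF n a t * sinF n b t)))"
    using bl(1) unfolding pw .
  show "integrable lborel (\<lambda>t. indicator {-pi..pi} t * (Re (f t) * (cosF n a t * cosF n b t + sinF n a t * sinF n b t)))"
    using bl(2) unfolding pw .
qed

lemma qK:
  assumes a: "a \<in> carrier_vec n" and b: "b \<in> carrier_vec n"
  shows "a \<bullet> ((map_mat Re (toeplitz n f) - map_mat Re (toeplitz n (\<lambda>t. complex_of_real (Re (f t))))) *\<^sub>v b) =
      (1/(2*pi)) * integral\<^sup>L lborel (\<lambda>t. indicator {-pi..pi} t * (Im (f t) * (sinF n a t * cosF n b t - cosF n a t * sinF n b t)))"
    and "integrable lborel (\<lambda>t. indicator {-pi..pi} t * (Im (f t) * (sinF n a t * cosF n b t - cosF n a t * sinF n b t)))"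
proof -
  have pw: "(\<lambda>t. \<Sum>i<n. \<Sum>j<n. a $ i * b $ j * SIf i j t) =
      (\<lambda>t. indicator {-pi..pi} t * (Im (f t) * (sinF n a t * cosF n b t - cosF n a t * sinF n b t)))"
  proof
    fix t
    have "(\<Sum>i<n. \<Sum>j<n. a $ i * b $ j * SIf i j t) =
        indicator {-pi..pi} t * (Im (f t) * (\<Sum>i<n. \<Sum>j<n. a $ i * b $ j * sin ((real i - real j) * t)))"
      by (simp add: SIf_def sum_distrib_left algebra_simps)
    then show "(\<Sum>i<n. \<Sum>j<n. a $ i * b $ j * SIf i j t) =
        indicator {-pi..pi} t * (Im (f t) * (sinF n a t * cosF n b t - cosF n a t * sinF n b t))"
      by (simp only: trig_sin)
  qed
  note bl = bilin[OF K_carrier K_entry(1) K_entry(2) a b]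
  show "a \<bullet> ((map_mat Re (toeplitz n f) - map_mat Re (toeplitz n (\<lambda>t. complex_of_real (Re (f t))))) *\<^sub>v b) =
      (1/(2*pi)) * integral\<^sup>L lborel (\<lambda>t. indicator {-pi..pi} t * (Im (f t) * (sinF n a t * cosF n b t - cosF n a t * sinF n b t)))"
    using bl(1) unfolding pw .
  show "integrable lborel (\<lambda>t. indicator {-pi..pi} t * (Im (f t) * (sinF n a t * cosF n b t - cosF n a t * sinF n b t)))"
    using bl(2) unfolding pw .
qed

lemma CRf_sym: "CRf i j = CRf j i"
proof -
  have "cos ((real j - real i) * t) = cos ((real i - real j) * t)" for t
    by (metis cos_minus minus_diff_eq mult_minus_left)
  then show ?thesis by (auto simp: CRf_def)
qed

lemma AR_sym: "(map_mat Re (toeplitz n (\<lambda>t. complex_of_real (Re (f t)))))\<^sup>T = map_mat Re (toeplitz n (\<lambda>t. complex_of_real (Re (f t))))"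
proof (rule eq_matI)
  fix i j assume "i < dim_row (map_mat Re (toeplitz n (\<lambda>t. complex_of_real (Re (f t)))))"
    "j < dim_col (map_mat Re (toeplitz n (\<lambda>t. complex_of_real (Re (f t)))))"
  then have i: "i < n" and j: "j < n" using AR_carrier by auto
  have "(map_mat Re (toeplitz n (\<lambda>t. complex_of_real (Re (f t)))))\<^sup>T $$ (i,j) =
        map_mat Re (toeplitz n (\<lambda>t. complex_of_real (Re (f t)))) $$ (j,i)"
    using i j AR_carrier by auto
  also have "\<dots> = map_mat Re (toeplitz n (\<lambda>t. complex_of_real (Re (f t)))) $$ (i,j)"
    unfolding AR_entry(1)[OF i j] AR_entry(1)[OF j i] CRf_sym[of i j] ..
  finally show "(map_mat Re (toeplitz n (\<lambda>t. complex_of_real (Re (f t)))))\<^sup>T $$ (i,j) =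
        map_mat Re (toeplitz n (\<lambda>t. complex_of_real (Re (f t)))) $$ (i,j)" .
qed (use AR_carrier in auto)


lemma YARY: "exchange_mat n * map_mat Re (toeplitz n (\<lambda>t. complex_of_real (Re (f t)))) * exchange_mat n
   = map_mat Re (toeplitz n (\<lambda>t. complex_of_real (Re (f t))))"
proof (rule eq_matI)
  fix i j assume "i < dim_row (map_mat Re (toeplitz n (\<lambda>t. complex_of_real (Re (f t)))))"
    "j < dim_col (map_mat Re (toeplitz n (\<lambda>t. complex_of_real (Re (f t)))))"
  then have i: "i < n" and j: "j < n" using AR_carrier by auto
  have i': "n - 1 - i < n" and j': "n - 1 - j < n" using i j by auto
  have rr: "real (n - Suc i) - real (n - Suc j) = real j - real i" using i j by (simp add: of_nat_diff)
  have sh: "CRf (n - 1 - i) (n - 1 - j) = CRf j i" by (rule ext) (simp add: CRf_def rr)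
  show "(exchange_mat n * map_mat Re (toeplitz n (\<lambda>t. complex_of_real (Re (f t)))) * exchange_mat n) $$ (i,j) =
        map_mat Re (toeplitz n (\<lambda>t. complex_of_real (Re (f t)))) $$ (i,j)"
    unfolding exch_conj[OF AR_carrier i j] AR_entry(1)[OF i' j'] AR_entry(1)[OF i j] sh CRf_sym[of j i] ..
qed (use AR_carrier exch_carrier in auto)

lemma anti:
  assumes v: "v \<in> carrier_vec n"
  shows "v \<bullet> ((map_mat Re (toeplitz n f) - map_mat Re (toeplitz n (\<lambda>t. complex_of_real (Re (f t))))) *\<^sub>v v) = 0"
  unfolding qK(1)[OF v v] by simp

lemma PD:
  assumes fR_pos: "AE t in lborel. t \<in> {-pi..pi} \<longrightarrow> Re (f t) > 0"
    and v: "v \<in> carrier_vec n" "v \<noteq> 0\<^sub>v n"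
  shows "v \<bullet> (map_mat Re (toeplitz n (\<lambda>t. complex_of_real (Re (f t)))) *\<^sub>v v) > 0"
proof -
  define F where "F t = indicator {-pi..pi} t * (Re (f t) * (cosF n v t * cosF n v t + sinF n v t * sinF n v t))" for t
  have Fint: "integrable lborel F" unfolding F_def using qAR(2)[OF v(1) v(1)] .
  have Fnn: "AE t in lborel. 0 \<le> F t"
    using fR_pos by eventually_elim (auto simp: F_def indicator_def)
  have Z: "AE t in lborel. t \<notin> {t. (cosF n v t)\<^sup>2 + (sinF n v t)\<^sup>2 = 0}"
    by (rule AE_not_in[OF countable_imp_null_set_lborel[OF trig_zero_countable[OF v]]])
  have "integral\<^sup>L lborel F \<noteq> 0"
  proof
    assume "integral\<^sup>L lborel F = 0"
    then have "AE t in lborel. F t = 0" using integral_nonneg_eq_0_iff_AE[OF Fint Fnn] by simp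
    then have "AE t in lborel. t \<notin> {-pi..pi}"
      using fR_pos Z
    proof eventually_elim
      case (elim t)
      show ?case
      proof
        assume t: "t \<in> {-pi..pi}"
        then have "Re (f t) * (cosF n v t * cosF n v t + sinF n v t * sinF n v t) = 0" using elim(1) by (simp add: F_def)
        then have "cosF n v t * cosF n v t + sinF n v t * sinF n v t = 0" using elim(2) t by simp
        then show False using elim(3) by (simp add: power2_eq_square)
      qed
    qed
    then have "{x \<in> space lborel. \<not> x \<notin> {-pi..pi}} \<in> null_sets lborel"
      by (subst AE_iff_null[symmetric]) auto
    moreover have "{x \<in> space lborel. \<not> x \<notin> {-pi..pi}} = {-pi..pi}" by auto
    ultimately have "emeasure lborel {-pi..pi} = 0" by (metis null_setsD1)
    then show False by simp
  qed
  moreover have "integral\<^sup>L lborel F \<ge> 0" using integral_nonneg_AE[OF Fnn] .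
  ultimately have "integral\<^sup>L lborel F > 0" by simp
  then show ?thesis unfolding qAR(1)[OF v(1) v(1)] F_def[symmetric] by simp
qed

lemma bound:
  assumes fR_pos: "AE t in lborel. t \<in> {-pi..pi} \<longrightarrow> Re (f t) > 0"
    and fI: "AE t in lborel. t \<in> {-pi..pi} \<longrightarrow> \<bar>Im (f t)\<bar> \<le> s * Re (f t)"
    and s: "s \<ge> 0"
    and z: "z \<in> carrier_vec n" and y: "y \<in> carrier_vec n"
  shows "2 * (z \<bullet> ((map_mat Re (toeplitz n f) - map_mat Re (toeplitz n (\<lambda>t. complex_of_real (Re (f t))))) *\<^sub>v y))
     \<le> z \<bullet> (map_mat Re (toeplitz n (\<lambda>t. complex_of_real (Re (f t)))) *\<^sub>v z)
       + s\<^sup>2 * (y \<bullet> (map_mat Re (toeplitz n (\<lambda>t. complex_of_real (Re (f t)))) *\<^sub>v y))"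
proof -
  define Fk where "Fk t = indicator {-pi..pi} t * (Im (f t) * (sinF n z t * cosF n y t - cosF n z t * sinF n y t))" for t
  define Fz where "Fz t = indicator {-pi..pi} t * (Re (f t) * (cosF n z t * cosF n z t + sinF n z t * sinF n z t))" for t
  define Fy where "Fy t = indicator {-pi..pi} t * (Re (f t) * (cosF n y t * cosF n y t + sinF n y t * sinF n y t))" for t
  have iK: "integrable lborel Fk" unfolding Fk_def using qK(2)[OF z y] .
  have iz: "integrable lborel Fz" unfolding Fz_def using qAR(2)[OF z z] .
  have iy: "integrable lborel Fy" unfolding Fy_def using qAR(2)[OF y y] .
  have mono: "integral\<^sup>L lborel (\<lambda>t. 2 * Fk t) \<le> integral\<^sup>L lborel (\<lambda>t. Fz t + s\<^sup>2 * Fy t)"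
  proof (rule integral_mono_AE)
    show "integrable lborel (\<lambda>t. 2 * Fk t)" using iK by simp
    show "integrable lborel (\<lambda>t. Fz t + s\<^sup>2 * Fy t)" using iz iy by simp
    show "AE t in lborel. 2 * Fk t \<le> Fz t + s\<^sup>2 * Fy t"
      using fR_pos fI
    proof eventually_elim
      case (elim t)
      show ?case
      proof (cases "t \<in> {-pi..pi}")
        case False then show ?thesis by (simp add: Fk_def Fz_def Fy_def)
      next
        case True
        define a where "a = cosF n z t"
        define b where "b = sinF n z t"
        define c where "c = cosF n y t"
        define d where "d = sinF n y t"
        have pos: "Re (f t) > 0" and le: "\<bar>Im (f t)\<bar> \<le> s * Re (f t)" using elim True by auto
        have k: "2 * s * \<bar>b * c - a * d\<bar> \<le> a\<^sup>2 + b\<^sup>2 + s\<^sup>2 * (c\<^sup>2 + d\<^sup>2)" by (rule key_ineq[OF s])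
        have "2 * (Im (f t) * (b * c - a * d)) \<le> 2 * (\<bar>Im (f t)\<bar> * \<bar>b * c - a * d\<bar>)"
          by (simp add: abs_mult[symmetric])
        also have "\<dots> \<le> 2 * (s * Re (f t) * \<bar>b * c - a * d\<bar>)"
          using le by (simp add: mult_right_mono)
        also have "\<dots> = Re (f t) * (2 * s * \<bar>b * c - a * d\<bar>)" by (simp add: algebra_simps)
        also have "\<dots> \<le> Re (f t) * (a\<^sup>2 + b\<^sup>2 + s\<^sup>2 * (c\<^sup>2 + d\<^sup>2))"
          using k pos by (simp add: mult_left_mono)
        finally show ?thesis using True
          by (simp add: Fk_def Fz_def Fy_def a_def[symmetric] b_def[symmetric] c_def[symmetric] d_def[symmetric]
              power2_eq_square algebra_simps)
      qed
    qed
  qed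
  have "2 * (z \<bullet> ((map_mat Re (toeplitz n f) - map_mat Re (toeplitz n (\<lambda>t. complex_of_real (Re (f t))))) *\<^sub>v y))
      = (1/(2*pi)) * integral\<^sup>L lborel (\<lambda>t. 2 * Fk t)"
    unfolding qK(1)[OF z y] Fk_def[symmetric] using iK by simp
  also have "\<dots> \<le> (1/(2*pi)) * integral\<^sup>L lborel (\<lambda>t. Fz t + s\<^sup>2 * Fy t)"
    using mono by (intro mult_left_mono) auto
  also have "\<dots> = z \<bullet> (map_mat Re (toeplitz n (\<lambda>t. complex_of_real (Re (f t)))) *\<^sub>v z)
       + s\<^sup>2 * (y \<bullet> (map_mat Re (toeplitz n (\<lambda>t. complex_of_real (Re (f t)))) *\<^sub>v y))"
    unfolding qAR(1)[OF z z] qAR(1)[OF y y] Fz_def[symmetric] Fy_def[symmetric] using iz iy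
    by (simp add: algebra_simps)
  finally show ?thesis .
qed

end

lemma main_alg:
  fixes AR A Y R B :: "real mat"
  assumes AR: "AR \<in> carrier_mat n n" "AR\<^sup>T = AR"
    and PD: "\<And>v. v \<in> carrier_vec n \<Longrightarrow> v \<noteq> 0\<^sub>v n \<Longrightarrow> v \<bullet> (AR *\<^sub>v v) > 0"
    and A: "A \<in> carrier_mat n n"
    and Y: "Y \<in> carrier_mat n n" "Y\<^sup>T = Y" "Y * Y = 1\<^sub>m n" "Y * AR * Y = AR"
    and anti: "\<And>v. v \<in> carrier_vec n \<Longrightarrow> v \<bullet> ((A - AR) *\<^sub>v v) = 0"
    and R: "R \<in> carrier_mat n n" "R * R = AR"
    and B: "B \<in> carrier_mat n n" "R * B = 1\<^sub>m n" "B * R = 1\<^sub>m n"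
    and x: "x \<in> carrier_vec n" "x \<noteq> 0\<^sub>v n" "(B * (Y * A) * B) *\<^sub>v x = lam \<cdot>\<^sub>v x"
  shows "1 \<le> lam\<^sup>2 \<and> (\<forall>s. (\<forall>z\<in>carrier_vec n. \<forall>y\<in>carrier_vec n.
            2 * (z \<bullet> ((A - AR) *\<^sub>v y)) \<le> z \<bullet> (AR *\<^sub>v z) + s\<^sup>2 * (y \<bullet> (AR *\<^sub>v y))) \<longrightarrow> lam\<^sup>2 \<le> 1 + s\<^sup>2)"
proof -
  define y where "y = B *\<^sub>v x"
  have y: "y \<in> carrier_vec n" using B x by (simp add: y_def)
  have Ry: "R *\<^sub>v y = x"
  proof -
    have "R *\<^sub>v y = (R * B) *\<^sub>v x" unfolding y_def by (rule assoc_mult_mat_vec[symmetric, of R n n B n x]) (use R B x in auto)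
    then show ?thesis using B x by simp
  qed
  have y0: "y \<noteq> 0\<^sub>v n"
  proof
    assume "y = 0\<^sub>v n"
    then have "x = R *\<^sub>v 0\<^sub>v n" using Ry by simp
    then show False using x mat_vec_zero[OF R(1)] by simp
  qed
  have RBw: "R *\<^sub>v (B *\<^sub>v w) = w" if "w \<in> carrier_vec n" for w
  proof -
    have "R *\<^sub>v (B *\<^sub>v w) = (R * B) *\<^sub>v w" by (rule assoc_mult_mat_vec[symmetric, of R n n B n w]) (use R B that in auto)
    then show ?thesis using B that by simp
  qed
  have YYw: "Y *\<^sub>v (Y *\<^sub>v w) = w" if "w \<in> carrier_vec n" for w
  proof -
    have "Y *\<^sub>v (Y *\<^sub>v w) = (Y * Y) *\<^sub>v w" by (rule assoc_mult_mat_vec[symmetric, of Y n n Y n w]) (use Y that in auto)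
    then show ?thesis using Y that by simp
  qed
  have ARy: "AR *\<^sub>v y \<in> carrier_vec n" "A *\<^sub>v y \<in> carrier_vec n" using AR A y by auto
  have eq1: "Y *\<^sub>v (A *\<^sub>v y) = lam \<cdot>\<^sub>v (AR *\<^sub>v y)"
  proof -
    have "(B * (Y * A) * B) *\<^sub>v x = B *\<^sub>v (Y *\<^sub>v (A *\<^sub>v y))"
      unfolding y_def using B Y A x by (simp add: assoc_mult_mat_vec[of _ n n _ n])
    then have "R *\<^sub>v ((B * (Y * A) * B) *\<^sub>v x) = Y *\<^sub>v (A *\<^sub>v y)" using RBw Y A y by simp
    moreover have "R *\<^sub>v (lam \<cdot>\<^sub>v x) = lam \<cdot>\<^sub>v (AR *\<^sub>v y)"
    proof -
      have "R *\<^sub>v (lam \<cdot>\<^sub>v x) = lam \<cdot>\<^sub>v (R *\<^sub>v (R *\<^sub>v y))" using R x Ry by (simp add: mult_mat_vec)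
      also have "R *\<^sub>v (R *\<^sub>v y) = (R * R) *\<^sub>v y" by (rule assoc_mult_mat_vec[symmetric, of R n n R n y]) (use R y in auto)
      finally show ?thesis using R by simp
    qed
    ultimately show ?thesis using x(3) by simp
  qed
  have eq2: "A *\<^sub>v y = lam \<cdot>\<^sub>v (Y *\<^sub>v (AR *\<^sub>v y))"
  proof -
    have "A *\<^sub>v y = Y *\<^sub>v (Y *\<^sub>v (A *\<^sub>v y))" using YYw ARy by simp
    also have "\<dots> = lam \<cdot>\<^sub>v (Y *\<^sub>v (AR *\<^sub>v y))" unfolding eq1 using Y ARy by (simp add: mult_mat_vec)
    finally show ?thesis .
  qed
  define G where "G = B * B"
  have G: "G \<in> carrier_mat n n" using B by (simp add: G_def)
  have GAR: "G * AR = 1\<^sub>m n"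
  proof -
    have "G * AR = B * ((B * R) * R)" unfolding G_def R(2)[symmetric] using B(1) R(1) by (simp add: assoc_mult_mat[of _ n n _ n _ n])
    then show ?thesis using B R(1) by simp
  qed
  have ARG: "AR * G = 1\<^sub>m n"
  proof -
    have "AR * G = R * ((R * B) * B)" unfolding G_def R(2)[symmetric] using B(1) R(1) by (simp add: assoc_mult_mat[of _ n n _ n _ n])
    then show ?thesis using B R(1) by simp
  qed
  have YAR: "AR * Y = Y * AR"
  proof -
    have "AR * Y = (Y * AR * Y) * Y" using Y(4) by simp
    also have "\<dots> = Y * AR * (Y * Y)" by (rule assoc_mult_mat[of "Y * AR" n n Y n Y n]) (use Y AR in auto)
    also have "\<dots> = Y * AR" using Y AR by simp
    finally show ?thesis .
  qed
  have YGY: "Y * G * Y = G"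
  proof -
    have "(Y * G * Y) * AR = Y * (G * AR) * Y" using Y G AR YAR by (simp add: assoc_mult_mat[of _ n n _ n _ n])
    then have h: "(Y * G * Y) * AR = 1\<^sub>m n" using Y GAR by simp
    have "Y * G * Y = (Y * G * Y) * (AR * G)" using ARG Y G by simp
    also have "\<dots> = ((Y * G * Y) * AR) * G" using Y G AR by (simp add: assoc_mult_mat[of _ n n _ n _ n])
    finally show ?thesis using h G by simp
  qed
  define q where "q = y \<bullet> (AR *\<^sub>v y)"
  have q: "q > 0" using PD[OF y y0] by (simp add: q_def)
  define w where "w = (A - AR) *\<^sub>v y"
  have K: "A - AR \<in> carrier_mat n n" using minus_carrier_mat A AR(1) by blast
  have w: "w \<in> carrier_vec n" using K y by (simp add: w_def)
  have Ay: "A *\<^sub>v y = AR *\<^sub>v y + w"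
  proof -
    have "w = A *\<^sub>v y - AR *\<^sub>v y" unfolding w_def using A AR y by (simp add: minus_mult_distrib_mat_vec)
    then show ?thesis using ARy A AR(1) by (intro eq_vecI) auto
  qed
  have yw: "y \<bullet> w = 0" using anti[OF y] by (simp add: w_def)
  have sym_sp: "(M *\<^sub>v u) \<bullet> v = u \<bullet> (M *\<^sub>v v)" if "M \<in> carrier_mat n n" "M\<^sup>T = M" "u \<in> carrier_vec n" "v \<in> carrier_vec n" for M :: "real mat" and u v
    using transpose_vec_mult_scalar[OF that(1) that(4) that(3)] that(2) by simp
  define T where "T = (A *\<^sub>v y) \<bullet> (G *\<^sub>v (A *\<^sub>v y))"
  have GARv: "G *\<^sub>v (AR *\<^sub>v v) = v" if "v \<in> carrier_vec n" for v
  proof -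
    have "G *\<^sub>v (AR *\<^sub>v v) = (G * AR) *\<^sub>v v" by (rule assoc_mult_mat_vec[symmetric, of G n n AR n v]) (use G AR that in auto)
    then show ?thesis using GAR that by simp
  qed
  have ARGv: "AR *\<^sub>v (G *\<^sub>v v) = v" if "v \<in> carrier_vec n" for v
  proof -
    have "AR *\<^sub>v (G *\<^sub>v v) = (AR * G) *\<^sub>v v" by (rule assoc_mult_mat_vec[symmetric, of AR n n G n v]) (use G AR that in auto)
    then show ?thesis using ARG that by simp
  qed
  have T1: "T = lam\<^sup>2 * q"
  proof -
    define v where "v = AR *\<^sub>v y"
    have v: "v \<in> carrier_vec n" using ARy by (simp add: v_def)
    have "T = lam * (lam * ((Y *\<^sub>v v) \<bullet> (G *\<^sub>v (Y *\<^sub>v v))))"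
      unfolding T_def eq2 v_def[symmetric] using Y G v
      by (simp add: mult_mat_vec smult_scalar_prod_distrib[of _ n] scalar_prod_smult_distrib[of _ n])
    also have "(Y *\<^sub>v v) \<bullet> (G *\<^sub>v (Y *\<^sub>v v)) = v \<bullet> (Y *\<^sub>v (G *\<^sub>v (Y *\<^sub>v v)))"
      using sym_sp[OF Y(1,2) v, of "G *\<^sub>v (Y *\<^sub>v v)"] Y G v by simp
    also have "Y *\<^sub>v (G *\<^sub>v (Y *\<^sub>v v)) = (Y * G * Y) *\<^sub>v v" using Y G v by (simp add: assoc_mult_mat_vec[of _ n n _ n])
    also have "\<dots> = G *\<^sub>v v" unfolding YGY ..
    also have "v \<bullet> (G *\<^sub>v v) = v \<bullet> y" unfolding v_def using GARv[OF y] by simp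
    also have "v \<bullet> y = q" unfolding v_def q_def using sym_sp[OF AR(1,2) y y] by simp
    finally show ?thesis by (simp add: power2_eq_square)
  qed
  define z where "z = G *\<^sub>v w"
  have z: "z \<in> carrier_vec n" using G w by (simp add: z_def)
  have wz: "w = AR *\<^sub>v z" unfolding z_def using ARGv[OF w] by simp
  define r where "r = z \<bullet> (AR *\<^sub>v z)"
  have r0: "r \<ge> 0" using PD[OF z] unfolding r_def by (cases "z = 0\<^sub>v n") (auto simp: mat_vec_zero[OF AR(1)] less_imp_le)
  have T2: "T = q + r"
  proof -
    define v where "v = AR *\<^sub>v y"
    have v: "v \<in> carrier_vec n" using ARy by (simp add: v_def)
    have Gv: "G *\<^sub>v v = y" unfolding v_def using GARv[OF y] .
    have "T = (v + w) \<bullet> (G *\<^sub>v v + z)"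
      unfolding T_def Ay v_def[symmetric] z_def using G v w by (simp add: mult_add_distrib_mat_vec)
    also have "\<dots> = v \<bullet> y + v \<bullet> z + (w \<bullet> y + w \<bullet> z)"
      unfolding Gv using v w y z by (simp add: add_scalar_prod_distrib[of _ n] scalar_prod_add_distrib[of _ n])
    also have "v \<bullet> y = q" unfolding v_def q_def using sym_sp[OF AR(1,2) y y] by simp
    also have "v \<bullet> z = y \<bullet> w" unfolding v_def wz using sym_sp[OF AR(1,2) y z] by simp
    also have "w \<bullet> y = y \<bullet> w" using comm_scalar_prod[OF w y] .
    also have "w \<bullet> z = r" unfolding r_def wz using sym_sp[OF AR(1,2) z z] by simp
    finally show ?thesis using yw by simp
  qed
  have main: "lam\<^sup>2 * q = q + r" using T1 T2 by simp
  have "1 \<le> lam\<^sup>2"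
  proof -
    have "1 * q \<le> lam\<^sup>2 * q" using main r0 by simp
    then show ?thesis using q by (simp add: mult_le_cancel_right)
  qed
  moreover have "lam\<^sup>2 \<le> 1 + s\<^sup>2"
    if bnd: "\<forall>z\<in>carrier_vec n. \<forall>y\<in>carrier_vec n.
            2 * (z \<bullet> ((A - AR) *\<^sub>v y)) \<le> z \<bullet> (AR *\<^sub>v z) + s\<^sup>2 * (y \<bullet> (AR *\<^sub>v y))" for s
  proof -
    have "2 * (z \<bullet> w) \<le> r + s\<^sup>2 * q" using bnd z y unfolding w_def r_def q_def by blast
    moreover have "z \<bullet> w = r" unfolding r_def wz ..
    ultimately have "r \<le> s\<^sup>2 * q" by simp
    then have "lam\<^sup>2 * q \<le> (1 + s\<^sup>2) * q" using main by (simp add: algebra_simps)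
    then show ?thesis using q by (simp add: mult_le_cancel_right)
  qed
  ultimately show ?thesis by blast
qed

lemma eigen_finite:
  fixes H :: "real mat"
  assumes "H \<in> carrier_mat n n"
  shows "finite {lam. eigenvalue H lam}"
proof -
  have "char_poly H \<noteq> 0" using degree_monic_char_poly[OF assms] by auto
  then have "finite {x. poly (char_poly H) x = 0}" by (rule poly_roots_finite)
  moreover have "{lam. eigenvalue H lam} \<subseteq> {x. poly (char_poly H) x = 0}"
    using eigenvalue_root_char_poly[OF assms] by auto
  ultimately show ?thesis by (rule finite_subset[rotated])
qed

theorem theorem3p4:
  fixes f :: "real \<Rightarrow> complex" and n :: nat
  assumes integrable: "set_integrable lborel {-pi..pi} f"
    and real_coeffs: "\<forall>k::int. Im (fourier_coeff f k) = 0"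
    and fR_pos: "AE t in lborel. t \<in> {-pi..pi} \<longrightarrow> Re (f t) > 0"
  defines "A \<equiv> map_mat Re (toeplitz n f)"
    and "A_R \<equiv> map_mat Re (toeplitz n (\<lambda>t. complex_of_real (Re (f t))))"
    and "S \<equiv> esssup (restrict_space lborel {-pi..pi}) (\<lambda>t. ereal \<bar>Im (f t) / Re (f t)\<bar>)"
  shows "\<exists>\<epsilon>::real. 0 \<le> \<epsilon> \<and> ereal \<epsilon> \<le> S \<and>
           ((\<not> (AE t in lborel. t \<in> {-pi..pi} \<longrightarrow> Im (f t) = 0)) \<longrightarrow> ereal \<epsilon> < S) \<and>
           (\<forall>lam. eigenvalue (spd_inv_sqrt n A_R * (exchange_mat n * A) * spd_inv_sqrt n A_R) lam
                 \<longrightarrow> lam \<in> {-1-\<epsilon>..-1} \<union> {1..1+\<epsilon>})"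
proof -
  define Y where "Y = exchange_mat n"
  define R where "R = spd_sqrt n A_R"
  define B where "B = spd_inv_sqrt n A_R"
  define H where "H = B * (Y * A) * B"
  have ARc: "A_R \<in> carrier_mat n n" unfolding A_R_def using AR_carrier[OF integrable] .
  have ARsym: "A_R\<^sup>T = A_R" unfolding A_R_def using AR_sym[OF integrable] .
  have PDv: "\<And>v. v \<in> carrier_vec n \<Longrightarrow> v \<noteq> 0\<^sub>v n \<Longrightarrow> v \<bullet> (A_R *\<^sub>v v) > 0"
    unfolding A_R_def using PD[OF integrable fR_pos] by blast
  have Ac: "A \<in> carrier_mat n n" unfolding A_def using A_carrier[OF integrable] .
  have Yc: "Y \<in> carrier_mat n n" "Y\<^sup>T = Y" "Y * Y = 1\<^sub>m n" "Y * A_R * Y = A_R"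
    unfolding Y_def A_R_def using exch_carrier exch_T exch_sq YARY[OF integrable] by auto
  have antiv: "\<And>v. v \<in> carrier_vec n \<Longrightarrow> v \<bullet> ((A - A_R) *\<^sub>v v) = 0"
    unfolding A_def A_R_def using anti[OF integrable] by blast
  have spd: "sym_pos_def n A_R" unfolding sym_pos_def_def using ARc ARsym PDv by blast
  note res = spd_resolve[OF spd, folded R_def B_def]
  have Rc: "R \<in> carrier_mat n n" using res by (simp add: sym_pos_def_def)
  have Hc: "H \<in> carrier_mat n n" unfolding H_def using res Yc Ac by auto
  have eig: "1 \<le> lam\<^sup>2 \<and> (\<forall>s. (\<forall>z\<in>carrier_vec n. \<forall>y\<in>carrier_vec n.
            2 * (z \<bullet> ((A - A_R) *\<^sub>v y)) \<le> z \<bullet> (A_R *\<^sub>v z) + s\<^sup>2 * (y \<bullet> (A_R *\<^sub>v y))) \<longrightarrow> lam\<^sup>2 \<le> 1 + s\<^sup>2)"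
    if "eigenvalue H lam" for lam
  proof -
    from that obtain x0 where "eigenvector H x0 lam" unfolding eigenvalue_def by blast
    then have x: "x0 \<in> carrier_vec n" "x0 \<noteq> 0\<^sub>v n" "H *\<^sub>v x0 = lam \<cdot>\<^sub>v x0"
      using Hc unfolding eigenvector_def by auto
    show ?thesis
      by (rule main_alg[OF ARc ARsym PDv Ac Yc antiv Rc _ _ _ _ x(1,2) x(3)[unfolded H_def]])
         (use res in auto)
  qed
  define M where "M = restrict_space lborel {-pi..pi}"
  define g where "g t = ereal \<bar>Im (f t) / Re (f t)\<bar>" for t
  have S_def': "S = esssup M g" unfolding S_def M_def g_def ..
  have AEM: "(AE t in M. P t) \<longleftrightarrow> (AE t in lborel. t \<in> {-pi..pi} \<longrightarrow> P t)" for P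
    unfolding M_def by (rule AE_restrict_space_iff) simp
  have spaceM: "emeasure M (space M) \<noteq> 0"
    unfolding M_def by (simp add: emeasure_restrict_space space_restrict_space)
  have S0: "0 \<le> S"
  proof (rule ccontr)
    assume "\<not> 0 \<le> S"
    then have "S < 0" by simp
    have "AE t in M. g t \<le> S" unfolding S_def' by (rule esssup_AE)
    then have "AE t in M. False"
    proof eventually_elim
      case (elim t)
      have "0 \<le> g t" by (simp add: g_def)
      then show False using elim \<open>S < 0\<close> by simp
    qed
    then have "ae_filter M = bot" by (simp add: eventually_False)
    then show False using spaceM ae_filter_eq_bot_iff[of M] by simp
  qed
  show ?thesis
  proof (cases S)
    case PInf
    define E where "E = {lam. eigenvalue H lam}"
    have Ef: "finite E" unfolding E_def by (rule eigen_finite[OF Hc])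
    define eps where "eps = Max (insert 1 (abs ` E)) - 1"
    have eps0: "0 \<le> eps" unfolding eps_def using Ef by simp
    have epsb: "\<bar>lam\<bar> \<le> 1 + eps" if "lam \<in> E" for lam
      unfolding eps_def using Ef that by simp
    show ?thesis
    proof (intro exI[of _ eps] conjI impI allI)
      show "0 \<le> eps" by fact
      show "ereal eps \<le> S" using PInf by simp
      show "ereal eps < S" using PInf by simp
      fix lam assume "eigenvalue (spd_inv_sqrt n A_R * (exchange_mat n * A) * spd_inv_sqrt n A_R) lam"
      then have ev: "eigenvalue H lam" unfolding H_def B_def Y_def .
      have "1 \<le> lam\<^sup>2" using eig[OF ev] by simp
      then have "1 \<le> \<bar>lam\<bar>" using abs_le_square_iff[of 1 lam] by simp
      moreover have "\<bar>lam\<bar> \<le> 1 + eps" using epsb ev by (simp add: E_def)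
      ultimately show "lam \<in> {-1-eps..-1} \<union> {1..1+eps}" by auto
    qed
  next
    case MInf
    then show ?thesis using S0 by simp
  next
    case (real s)
    have s0: "0 \<le> s" using S0 real by simp
    have "AE t in M. g t \<le> S" unfolding S_def' by (rule esssup_AE)
    then have AEs: "AE t in lborel. t \<in> {-pi..pi} \<longrightarrow> \<bar>Im (f t) / Re (f t)\<bar> \<le> s"
      unfolding AEM real by (simp add: g_def)
    have fI: "AE t in lborel. t \<in> {-pi..pi} \<longrightarrow> \<bar>Im (f t)\<bar> \<le> s * Re (f t)"
      using AEs fR_pos
    proof eventually_elim
      case (elim t)
      show ?case
      proof
        assume t: "t \<in> {-pi..pi}"
        then have pos: "Re (f t) > 0" and le: "\<bar>Im (f t)\<bar> / Re (f t) \<le> s" using elim by auto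
        then show "\<bar>Im (f t)\<bar> \<le> s * Re (f t)" by (simp add: divide_le_eq)
      qed
    qed
    have bnd: "\<forall>z\<in>carrier_vec n. \<forall>y\<in>carrier_vec n.
            2 * (z \<bullet> ((A - A_R) *\<^sub>v y)) \<le> z \<bullet> (A_R *\<^sub>v z) + s\<^sup>2 * (y \<bullet> (A_R *\<^sub>v y))"
      unfolding A_def A_R_def using bound[OF integrable fR_pos fI s0] by blast
    define eps where "eps = sqrt (1 + s\<^sup>2) - 1"
    have eps0: "0 \<le> eps" unfolding eps_def by simp
    have sq: "(1 + eps)\<^sup>2 = 1 + s\<^sup>2" unfolding eps_def by simp
    have epss: "eps \<le> s"
    proof -
      have "sqrt (1 + s\<^sup>2) \<le> sqrt ((1 + s)\<^sup>2)" using s0 by (intro real_sqrt_le_mono) (simp add: power2_eq_square algebra_simps)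
      then show ?thesis unfolding eps_def using s0 by simp
    qed
    have epslt: "eps < s" if "0 < s"
    proof -
      have "sqrt (1 + s\<^sup>2) < sqrt ((1 + s)\<^sup>2)" using that by (intro real_sqrt_less_mono) (simp add: power2_eq_square algebra_simps)
      then show ?thesis unfolding eps_def using s0 by simp
    qed
    show ?thesis
    proof (intro exI[of _ eps] conjI impI allI)
      show "0 \<le> eps" by fact
      show "ereal eps \<le> S" using real epss by simp
      assume nAE: "\<not> (AE t in lborel. t \<in> {-pi..pi} \<longrightarrow> Im (f t) = 0)"
      have "s \<noteq> 0"
      proof
        assume "s = 0"
        then have "AE t in lborel. t \<in> {-pi..pi} \<longrightarrow> Im (f t) = 0" using fI by (auto elim!: eventually_mono)
        then show False using nAE by simp
      qed
      then show "ereal eps < S" using real epslt s0 by simp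
    next
      fix lam assume "eigenvalue (spd_inv_sqrt n A_R * (exchange_mat n * A) * spd_inv_sqrt n A_R) lam"
      then have ev: "eigenvalue H lam" unfolding H_def B_def Y_def .
      have l1: "1 \<le> lam\<^sup>2" and l2: "lam\<^sup>2 \<le> (1 + eps)\<^sup>2" using eig[OF ev] bnd sq by auto
      have "1 \<le> \<bar>lam\<bar>" using l1 abs_le_square_iff[of 1 lam] by simp
      moreover have "\<bar>lam\<bar> \<le> 1 + eps" using l2 eps0 abs_le_square_iff[of lam "1 + eps"] by simp
      ultimately show "lam \<in> {-1-eps..-1} \<union> {1..1+eps}" by auto
    qed
  qed
qed

end
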